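(* Each homotopy slalom curve is the composition of elementary homotopy slalom curves.
   Context: All curves lie in $\mathbb{C}\setminus i\mathbb{Z}$. An elementary slalom curve is a simple curve with endpoints on different connected components of $i\mathbb{R}\setminus i\mathbb{Z}$ whose interior is contained in one of the open half-planes $\{\mathrm{Re}\,z>0\}$ or $\{\mathrm{Re}\,z<0\}$. A slalom curve is a curve which can be divided into finitely many elementary slalom curves such that consecutive ones are contained in different half-planes. A curve homotopic to a slalom curve (resp. elementary slalom curve) in $\mathbb{C}\setminus i\mathbb{Z}$ through curves with endpoints in $i\mathbb{R}\setminus i\mathbb{Z}$ is a homotopy slalom curve (resp. elementary homotopy slalom curve). Composition means concatenation of curves. *)

theory Defs
  imports "HOL-Analysis.Analysis"
begin

definition iZ :: "complex set" where
  "iZ = {z. Re z = 0 \<and> Im z \<in> \<int>}"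

definition iRZ :: "complex set" where
  "iRZ = {z. Re z = 0 \<and> Im z \<notin> \<int>}"

definition Dom :: "complex set" where
  "Dom = - iZ"

definition elem_slalom_side :: "bool \<Rightarrow> (real \<Rightarrow> complex) \<Rightarrow> bool" where
  "elem_slalom_side r g \<longleftrightarrow>
     simple_path g \<and> path_image g \<subseteq> Dom \<and>
     pathstart g \<in> iRZ \<and> pathfinish g \<in> iRZ \<and>
     \<not> connected_component iRZ (pathstart g) (pathfinish g) \<and>
     (\<forall>t\<in>{0<..<1}. if r then Re (g t) > 0 else Re (g t) < 0)"

definition elem_slalom :: "(real \<Rightarrow> complex) \<Rightarrow> bool" where
  "elem_slalom g \<longleftrightarrow> (\<exists>r. elem_slalom_side r g)"

definition slalom :: "(real \<Rightarrow> complex) \<Rightarrow> bool" where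
  "slalom g \<longleftrightarrow> path g \<and> path_image g \<subseteq> Dom \<and>
     (\<exists>n t r. n \<ge> 1 \<and> t 0 = 0 \<and> t n = 1 \<and>
        (\<forall>i<n. t i < t (Suc i)) \<and>
        (\<forall>i<n. elem_slalom_side (r i) (subpath (t i) (t (Suc i)) g)) \<and>
        (\<forall>i. Suc i < n \<longrightarrow> r i \<noteq> r (Suc i)))"

definition slalom_homotopic :: "(real \<Rightarrow> complex) \<Rightarrow> (real \<Rightarrow> complex) \<Rightarrow> bool" where
  "slalom_homotopic g f \<longleftrightarrow>
     homotopic_with_canon (\<lambda>h. h 0 \<in> iRZ \<and> h 1 \<in> iRZ) {0..1} Dom g f"

definition homotopy_slalom :: "(real \<Rightarrow> complex) \<Rightarrow> bool" where
  "homotopy_slalom g \<longleftrightarrow> (\<exists>f. slalom f \<and> slalom_homotopic g f)"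

definition homotopy_elem_slalom :: "(real \<Rightarrow> complex) \<Rightarrow> bool" where
  "homotopy_elem_slalom g \<longleftrightarrow> (\<exists>f. elem_slalom f \<and> slalom_homotopic g f)"

end

theory Submission
  imports Defs
begin

datatype vx = VL | VR | VM int

fun step :: "vx list \<Rightarrow> vx \<Rightarrow> vx list" where
  "step [] x = [x]"
| "step [y] x = (if x = y then [y] else [x, y])"
| "step (y # z # S) x = (if x = y then y # z # S else if x = z then z # S else x # y # z # S)"

definition adj :: "vx \<Rightarrow> vx \<Rightarrow> bool" where
  "adj x y \<longleftrightarrow> x = y \<or> (\<exists>k. (x = VM k \<and> (y = VL \<or> y = VR)) \<or> (y = VM k \<and> (x = VL \<or> x = VR)))"

lemma step_ne: "step S x \<noteq> []"
  by (cases "(S,x)" rule: step.cases) auto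

lemma hd_step: "hd (step S x) = x"
  by (cases "(S,x)" rule: step.cases) auto

fun rs :: "vx list \<Rightarrow> bool" where
  "rs (a # b # c # r) = (a \<noteq> b \<and> a \<noteq> c \<and> rs (b # c # r))"
| "rs [a, b] = (a \<noteq> b)"
| "rs _ = True"

lemma rs_step: "rs S \<Longrightarrow> rs (step S x)"
  by (cases "(S,x)" rule: step.cases) (auto elim: rs.elims)

lemma rs_foldl: "rs S \<Longrightarrow> rs (foldl step S w)"
  by (induction w arbitrary: S) (auto simp: rs_step)

lemma foldl_step_ne: "S \<noteq> [] \<Longrightarrow> foldl step S w \<noteq> []"
  by (induction w arbitrary: S) (auto simp: step_ne)

lemma hd_foldl_step: "w \<noteq> [] \<Longrightarrow> hd (foldl step S w) = last w"
  by (induction w arbitrary: S rule: rev_induct) (auto simp: hd_step)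

fun geo :: "int \<Rightarrow> vx \<Rightarrow> vx \<Rightarrow> vx list" where
  "geo k a b = (if a = b then [] else if a = VM k \<or> b = VM k then [b] else [VM k, b])"

lemma star_step:
  assumes "S \<noteq> []" "rs S" "hd S \<in> {VL, VR, VM k}" "y \<in> {VL, VR, VM k}" "x \<in> {VL, VR, VM k}" "adj y x"
  shows "step (foldl step S (geo k (hd S) y)) x = foldl step S (geo k (hd S) x)"
proof -
  obtain t S' where S: "S = t # S'" using assms(1) by (cases S) auto
  show ?thesis
    using assms(2-6) unfolding S
    by (cases S' rule: rs.cases; auto simp: adj_def split: if_splits)
qed

lemma star:
  assumes "S \<noteq> []" "rs S" "hd S \<in> {VL, VR, VM k}" "set w \<subseteq> {VL, VR, VM k}"
    "successively adj (hd S # w)" "w \<noteq> []"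
  shows "foldl step S w = foldl step S (geo k (hd S) (last w))"
  using assms(4-6)
proof (induction w rule: rev_induct)
  case Nil then show ?case by simp
next
  case (snoc x w)
  show ?case
  proof (cases "w = []")
    case True
    then show ?thesis using snoc star_step[OF assms(1,2,3), of "hd S" x] assms
      by (auto simp: adj_def)
  next
    case False
    have "successively adj (hd S # w)" using snoc(3)
      by (metis append_Cons successively_append_iff)
    then have IH: "foldl step S w = foldl step S (geo k (hd S) (last w))"
      using snoc False by auto
    have "adj (last w) x" using snoc(3) False
      by (metis append_Cons last_ConsR list.distinct(1) successively_append_iff hd_Cons_tl last_in_set list.sel(1) successively_Cons) 
    have "last w \<in> set w" using False by simp
    then have "last w \<in> {VL, VR, VM k}" "x \<in> {VL, VR, VM k}" using snoc(2) by auto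
    then have "step (foldl step S w) x = foldl step S (geo k (hd S) x)"
      using IH star_step[OF assms(1,2,3), of "last w" x] \<open>adj (last w) x\<close> by simp
    then show ?thesis by simp
  qed
qed

lemma dup_step: "S \<noteq> [] \<Longrightarrow> hd S = x \<Longrightarrow> step S x = S"
  by (cases "(S,x)" rule: step.cases) auto

lemma cell:
  assumes "S \<noteq> []" "rs S" "hd S \<in> {VL, VR, VM k}"
    "set w1 \<subseteq> {VL, VR, VM k}" "successively adj (hd S # w1)" "w1 \<noteq> []"
    "set w2 \<subseteq> {VL, VR, VM k}" "successively adj (hd S # w2)" "w2 \<noteq> []"
    "last w1 = last w2"
  shows "foldl step S w1 = foldl step S w2"
  using star[OF assms(1-6)] star[OF assms(1-3) assms(7-9)] assms(10) by simp

lemma split_stack: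
  assumes "foldl step S0 w = P @ S" "P \<noteq> []" "S \<noteq> []" "S0 \<noteq> []" "length S0 \<le> length S"
  shows "\<exists>w1 w2. w = w1 @ w2 \<and> foldl step S0 w1 = S \<and> w2 \<noteq> [] \<and> foldl step [hd S] w2 = P @ [hd S]"
  using assms(1,2)
proof (induction w arbitrary: P rule: rev_induct)
  case Nil
  then have "S0 = P @ S" by simp
  then have "length S0 = length P + length S" by simp
  then show ?case using assms(5) Nil(2) by simp
next
  case (snoc x w)
  define U where "U = foldl step S0 w"
  have U: "step U x = P @ S" using snoc(2) by (simp add: U_def)
  have Une: "U \<noteq> []" using assms(4) by (simp add: U_def foldl_step_ne)
  obtain S1 S' where S: "S = S1 # S'" using assms(3) by (cases S) auto
  show ?case
  proof (cases "x = hd U")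
    case True
    then have "U = P @ S" using U Une dup_step by metis
    from snoc(1)[OF this[unfolded U_def] snoc(3)] obtain w1 w2 where
      w: "w = w1 @ w2" "foldl step S0 w1 = S" "w2 \<noteq> []" "foldl step [hd S] w2 = P @ [hd S]" by blast
    have "step (P @ [hd S]) x = P @ [hd S]"
      using True \<open>U = P @ S\<close> snoc(3) by (intro dup_step) auto
    then show ?thesis using w by (intro exI[of _ w1] exI[of _ "w2 @ [x]"]) auto
  next
    case False
    obtain u U' where Uu: "U = u # U'" using Une by (cases U) auto
    show ?thesis
    proof (cases "U' \<noteq> [] \<and> x = hd U'")
      case True
      then obtain u2 U'' where U': "U' = u2 # U''" by (cases U') auto
      have "step U x = U'" using True False Uu U' by auto
      then have "U = (u # P) @ S" using U Uu by simp
      from snoc(1)[OF this[unfolded U_def]] obtain w1 w2 where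
        w: "w = w1 @ w2" "foldl step S0 w1 = S" "w2 \<noteq> []" "foldl step [hd S] w2 = (u # P) @ [hd S]" by blast
      have "step ((u # P) @ [hd S]) x = P @ [hd S]"
        using True U' \<open>step U x = U'\<close> U Uu snoc(3) False by (cases P) auto
      then show ?thesis using w by (intro exI[of _ w1] exI[of _ "w2 @ [x]"]) auto
    next
      case False2: False
      have push: "step U x = x # U" using False False2 Uu
        by (cases U'; auto)
      then have xU: "x # U = P @ S" using U by simp
      show ?thesis
      proof (cases "U = S")
        case True
        then have "P = [x]" using xU by simp
        have "step [hd S] x = [x, hd S]" using False True by auto
        then show ?thesis using True \<open>P = [x]\<close>
          by (intro exI[of _ w] exI[of _ "[x]"]) (auto simp: U_def)
      next
        case UneS: False
        obtain P' where P: "P = x # P'" "U = P' @ S" using xU snoc(3) by (cases P) auto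
        have "P' \<noteq> []" using UneS P by auto
        from snoc(1)[OF P(2)[unfolded U_def] this] obtain w1 w2 where
          w: "w = w1 @ w2" "foldl step S0 w1 = S" "w2 \<noteq> []" "foldl step [hd S] w2 = P' @ [hd S]" by blast
        have "step (P' @ [hd S]) x = x # P' @ [hd S]"
          using False False2 Uu P \<open>P' \<noteq> []\<close> S
          by (cases P' rule: rs.cases) (auto split: if_splits)
        then show ?thesis using w P by (intro exI[of _ w1] exI[of _ "w2 @ [x]"]) auto
      qed
    qed
  qed
qed

definition backtrack :: "vx list \<Rightarrow> bool" where
  "backtrack xs \<longleftrightarrow> (\<exists>u x y m v. xs = u @ [x] @ replicate (Suc m) y @ [x] @ v \<and> x \<noteq> y)"

lemma remdups_adj_two:
  "remdups_adj X = y # z # r \<Longrightarrow> \<exists>m X'. X = replicate (Suc m) y @ z # X'"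
proof (induction X arbitrary: y rule: remdups_adj.induct)
  case 1 then show ?case by simp
next
  case (2 x) then show ?case by simp
next
  case (3 x1 x2 xs)
  show ?case
  proof (cases "x1 = x2")
    case True
    then obtain m X' where "x1 # xs = replicate (Suc m) y @ z # X'" using 3 by auto
    then show ?thesis using True
      by (intro exI[of _ "Suc m"] exI[of _ X']) auto
  next
    case False
    then have "y = x1" "remdups_adj (x2 # xs) = z # r" using 3(3) by auto
    then have "x2 = z" by (metis hd_remdups_adj list.sel(1))
    then show ?thesis using \<open>y = x1\<close> by (intro exI[of _ 0] exI[of _ xs]) auto
  qed
qed

lemma nopop:
  assumes "\<not> backtrack (s # w)"
  shows "foldl step [s] w = remdups_adj (rev (s # w))"
  using assms
proof (induction w rule: rev_induct)
  case Nil then show ?case by simp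
next
  case (snoc z w)
  have "\<not> backtrack (s # w)" using snoc(2) unfolding backtrack_def
    by (metis append.assoc append_Cons)
  then have U: "foldl step [s] w = remdups_adj (rev (s # w))" using snoc(1) by simp
  obtain y r where yr: "remdups_adj (rev (s # w)) = y # r"
    by (cases "remdups_adj (rev (s # w))") auto
  have "step (y # r) z = (if z = y then y # r else z # y # r)"
  proof (cases r)
    case (Cons z' r')
    have "z \<noteq> z' \<or> z = y"
    proof (rule ccontr)
      assume "\<not> (z \<noteq> z' \<or> z = y)"
      then have zz: "z = z'" "z \<noteq> y" by auto
      obtain m X' where X: "rev (s # w) = replicate (Suc m) y @ z' # X'"
        using remdups_adj_two[of "rev (s # w)" y z' r'] yr Cons by auto
      have "s # w = rev X' @ [z'] @ replicate (Suc m) y"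
        using arg_cong[OF X, of rev] by (simp add: replicate_append_same)
      then have "backtrack (s # w @ [z])" unfolding backtrack_def using zz
        by (intro exI[of _ "rev X'"] exI[of _ z'] exI[of _ y] exI[of _ m] exI[of _ "[]"]) simp
      then show False using snoc(2) by simp
    qed
    then show ?thesis using Cons by auto
  qed simp
  then show ?case using U yr by (simp add: remdups_adj_Cons)
qed

lemma backtrack_or_set:
  assumes "foldl step [s] w = T"
  shows "backtrack (s # w) \<or> set (s # w) \<subseteq> set T"
  using nopop[of s w] assms by auto

lemma run_back:
  assumes "rs T" "T \<noteq> []" "hd T = x" "y \<noteq> x"
  shows "foldl step T (replicate (Suc m) y @ [x]) = T"
proof -
  obtain T' where T: "T = x # T'" using assms by (cases T) auto
  have 1: "step T y = (if T' \<noteq> [] \<and> hd T' = y then T' else y # T)"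
    using assms T by (cases T'; auto)
  have rep: "foldl step (y # R) (replicate m y) = y # R" for R
    by (induction m) (simp_all add: dup_step)
  show ?thesis
  proof (cases "T' \<noteq> [] \<and> hd T' = y")
    case True
    then obtain T'' where T': "T' = y # T''" by (cases T') auto
    have "T'' = [] \<or> hd T'' \<noteq> x" using assms(1) T T' by (cases T'') auto
    then have "step (y # T'') x = x # y # T''" using assms(4) by (cases T'') auto
    then show ?thesis using 1 True T T' rep[of T''] by simp
  next
    case False
    have "step (y # x # T') x = x # T'" using assms(4) by simp
    then show ?thesis using 1 False T rep[of "x # T'"] by simp
  qed
qed

lemma backtrack_remove:
  assumes "y \<noteq> x"
  shows "foldl step [] (u @ [x] @ replicate (Suc m) y @ [x] @ v) = foldl step [] (u @ [x, x] @ v)"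
proof -
  define T where "T = foldl step [] (u @ [x])"
  have T: "rs T" "T \<noteq> []" "hd T = x"
    unfolding T_def using rs_foldl[of "[]" "u @ [x]"] by (auto simp: step_ne hd_step)
  have "foldl step [] (u @ [x] @ replicate (Suc m) y @ [x] @ v) = foldl step (foldl step T (replicate (Suc m) y @ [x])) v"
    by (simp add: T_def del: replicate.simps)
  also have "\<dots> = foldl step T v" using run_back[OF T assms] by simp
  also have "\<dots> = foldl step [] (u @ [x, x] @ v)"
    using T by (simp add: T_def dup_step)
  finally show ?thesis .
qed

lemma last_step: "S \<noteq> [] \<Longrightarrow> last (step S x) = last S"
  by (cases "(S,x)" rule: step.cases) auto

lemma last_foldl_step: "S \<noteq> [] \<Longrightarrow> last (foldl step S w) = last S"
  by (induction w arbitrary: S) (auto simp: last_step step_ne)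

definition st :: "complex \<Rightarrow> vx" where
  "st z = (if Re z < 0 then VL else if Re z > 0 then VR else VM \<lfloor>Im z\<rfloor>)"

lemma Dom_iff: "z \<in> Dom \<longleftrightarrow> \<not> (Re z = 0 \<and> Im z \<in> \<int>)"
  by (auto simp: Dom_def iZ_def)

lemma st_VM: "st z = VM k \<longleftrightarrow> Re z = 0 \<and> \<lfloor>Im z\<rfloor> = k"
  by (auto simp: st_def)
lemma st_VL: "st z = VL \<longleftrightarrow> Re z < 0"
  by (auto simp: st_def)
lemma st_VR: "st z = VR \<longleftrightarrow> Re z > 0"
  by (auto simp: st_def)

lemma not_int_floor: "x \<notin> \<int> \<Longrightarrow> of_int \<lfloor>x\<rfloor> < x"
  by (metis Ints_of_int floor_correct order_le_less)

lemma same_floor_segment: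
  fixes a b :: real
  assumes "a \<notin> \<int>" "b \<notin> \<int>" "\<lfloor>a\<rfloor> = \<lfloor>b\<rfloor>" "0 \<le> u" "u \<le> 1"
  shows "(1 - u) * a + u * b \<notin> \<int>"
proof
  assume "(1 - u) * a + u * b \<in> \<int>"
  then obtain n where n: "(1 - u) * a + u * b = of_int n" by (auto elim: Ints_cases)
  define k where "k = \<lfloor>a\<rfloor>"
  have a: "of_int k < a" "a < of_int k + 1" using not_int_floor[OF assms(1)] by (auto simp: k_def)
  have b: "of_int k < b" "b < of_int k + 1" using not_int_floor[OF assms(2)] assms(3) by (auto simp: k_def)
  have "of_int k < (1 - u) * a + u * b"
  proof -
    have "(1 - u) * of_int k \<le> (1 - u) * a" using a assms(5) by (intro mult_left_mono) auto
    moreover have "u * of_int k \<le> u * b" using b assms(4) by (intro mult_left_mono) auto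
    moreover have "(1-u) * of_int k < (1 - u) * a \<or> u * of_int k < u * b"
      using a b assms(4,5) by (cases "u = 0") auto
    ultimately show ?thesis by (auto simp: algebra_simps)
  qed
  moreover have "(1 - u) * a + u * b < of_int k + 1"
  proof -
    have "(1 - u) * a \<le> (1 - u) * (of_int k + 1)" using a assms(5) by (intro mult_left_mono) auto
    moreover have "u * b \<le> u * (of_int k + 1)" using b assms(4) by (intro mult_left_mono) auto
    moreover have "(1-u) * a < (1 - u) * (of_int k + 1) \<or> u * b < u * (of_int k + 1)"
      using a b assms(4,5) by (cases "u = 0") auto
    ultimately show ?thesis by (auto simp: algebra_simps)
  qed
  ultimately show False using n by (metis floor_eq2 floor_of_int less_le)
qed

lemma seg_Dom:
  assumes "z \<in> Dom" "w \<in> Dom" "adj (st z) (st w)"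
  shows "closed_segment z w \<subseteq> Dom"
proof
  fix p assume "p \<in> closed_segment z w"
  then obtain u where u: "0 \<le> u" "u \<le> 1" "p = (1 - u) *\<^sub>R z + u *\<^sub>R w"
    by (auto simp: closed_segment_def)
  have Rep: "Re p = (1 - u) * Re z + u * Re w" and Imp: "Im p = (1 - u) * Im z + u * Im w"
    using u by auto
  show "p \<in> Dom"
  proof (cases "st z = st w")
    case True
    show ?thesis
    proof (cases "Re z = 0")
      case True
      then have "Re w = 0" "\<lfloor>Im z\<rfloor> = \<lfloor>Im w\<rfloor>" using \<open>st z = st w\<close> by (auto simp: st_def split: if_splits)
      moreover have "Im z \<notin> \<int>" "Im w \<notin> \<int>" using assms True \<open>Re w = 0\<close> by (auto simp: Dom_iff)
      ultimately show ?thesis using same_floor_segment[of "Im z" "Im w" u] u Imp by (auto simp: Dom_iff)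
    next
      case False
      then have "(Re z < 0 \<and> Re w < 0) \<or> (Re z > 0 \<and> Re w > 0)"
        using \<open>st z = st w\<close> by (auto simp: st_def split: if_splits)
      then have "Re p \<noteq> 0"
      proof
        assume "Re z < 0 \<and> Re w < 0"
        then have "(1 - u) * Re z \<le> 0" "u * Re w \<le> 0" "(1 - u) * Re z < 0 \<or> u * Re w < 0"
          using u by (auto simp: mult_nonneg_nonpos mult_pos_neg) (cases "u = 1"; auto simp: mult_pos_neg)
        then show ?thesis using Rep by linarith
      next
        assume "Re z > 0 \<and> Re w > 0"
        then have "(1 - u) * Re z \<ge> 0" "u * Re w \<ge> 0" "(1 - u) * Re z > 0 \<or> u * Re w > 0"
          using u by auto (cases "u = 1"; auto)
        then show ?thesis using Rep by linarith
      qed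
      then show ?thesis by (auto simp: Dom_iff)
    qed
  next
    case False
    then obtain k where k: "(st z = VM k \<and> (st w = VL \<or> st w = VR)) \<or> (st w = VM k \<and> (st z = VL \<or> st z = VR))"
      using assms(3) by (auto simp: adj_def)
    then have "(Re z = 0 \<and> Re w \<noteq> 0) \<or> (Re w = 0 \<and> Re z \<noteq> 0)"
      by (auto simp: st_def split: if_splits)
    then show ?thesis
    proof
      assume a: "Re z = 0 \<and> Re w \<noteq> 0"
      show ?thesis
      proof (cases "u = 0")
        case True then show ?thesis using u assms by simp
      next
        case False then have "Re p \<noteq> 0" using a Rep u by auto
        then show ?thesis by (auto simp: Dom_iff)
      qed
    next
      assume a: "Re w = 0 \<and> Re z \<noteq> 0"
      show ?thesis
      proof (cases "u = 1")
        case True then show ?thesis using u assms by simp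
      next
        case False then have "Re p \<noteq> 0" using a Rep u by auto
        then show ?thesis by (auto simp: Dom_iff)
      qed
    qed
  qed
qed

definition HL :: "complex set" where "HL = {z. Re z \<le> 0} \<inter> Dom"
definition HR :: "complex set" where "HR = {z. Re z \<ge> 0} \<inter> Dom"

lemma seg_HL:
  assumes "z \<in> Dom" "w \<in> Dom" "adj (st z) (st w)" "Re z \<le> 0" "Re w \<le> 0"
  shows "closed_segment z w \<subseteq> HL"
proof -
  have "closed_segment z w \<subseteq> {z. Re z \<le> 0}"
  proof
    fix p assume "p \<in> closed_segment z w"
    then obtain u where u: "0 \<le> u" "u \<le> 1" "p = (1 - u) *\<^sub>R z + u *\<^sub>R w"
      by (auto simp: closed_segment_def)
    have "(1 - u) * Re z \<le> 0" "u * Re w \<le> 0" using u assms by (auto simp: mult_nonneg_nonpos)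
    then show "p \<in> {z. Re z \<le> 0}" using u by auto
  qed
  then show ?thesis using seg_Dom[OF assms(1-3)] by (auto simp: HL_def)
qed

lemma seg_HR:
  assumes "z \<in> Dom" "w \<in> Dom" "adj (st z) (st w)" "Re z \<ge> 0" "Re w \<ge> 0"
  shows "closed_segment z w \<subseteq> HR"
proof -
  have "closed_segment z w \<subseteq> {z. Re z \<ge> 0}"
  proof
    fix p assume "p \<in> closed_segment z w"
    then obtain u where u: "0 \<le> u" "u \<le> 1" "p = (1 - u) *\<^sub>R z + u *\<^sub>R w"
      by (auto simp: closed_segment_def)
    have "(1 - u) * Re z \<ge> 0" "u * Re w \<ge> 0" using u assms by auto
    then show "p \<in> {z. Re z \<ge> 0}" using u by auto
  qed
  then show ?thesis using seg_Dom[OF assms(1-3)] by (auto simp: HR_def)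
qed

lemma starlike_HL: "starlike HL"
  unfolding starlike_def
proof (intro bexI ballI)
  show "-1 \<in> HL" by (auto simp: HL_def Dom_iff)
  fix x assume x: "x \<in> HL"
  show "closed_segment (-1) x \<subseteq> HL"
  proof
    fix p assume "p \<in> closed_segment (-1) x"
    then obtain u where u: "0 \<le> u" "u \<le> 1" "p = (1 - u) *\<^sub>R (-1) + u *\<^sub>R x"
      by (auto simp: closed_segment_def)
    have "u * Re x \<le> 0" using u x by (auto simp: HL_def mult_nonneg_nonpos)
    then have R: "Re p = -(1 - u) + u * Re x" using u by simp
    show "p \<in> HL"
    proof (cases "u = 1")
      case True then show ?thesis using u x by simp
    next
      case False
      then have "Re p < 0" using R u \<open>u * Re x \<le> 0\<close> by auto
      then show ?thesis by (auto simp: HL_def Dom_iff)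
    qed
  qed
qed

lemma starlike_HR: "starlike HR"
  unfolding starlike_def
proof (intro bexI ballI)
  show "1 \<in> HR" by (auto simp: HR_def Dom_iff)
  fix x assume x: "x \<in> HR"
  show "closed_segment 1 x \<subseteq> HR"
  proof
    fix p assume "p \<in> closed_segment 1 x"
    then obtain u where u: "0 \<le> u" "u \<le> 1" "p = (1 - u) *\<^sub>R 1 + u *\<^sub>R x"
      by (auto simp: closed_segment_def)
    have "u * Re x \<ge> 0" using u x by (auto simp: HR_def)
    then have R: "Re p = (1 - u) + u * Re x" using u by simp
    show "p \<in> HR"
    proof (cases "u = 1")
      case True then show ?thesis using u x by simp
    next
      case False
      then have "Re p > 0" using R u \<open>u * Re x \<ge> 0\<close> by auto
      then show ?thesis by (auto simp: HR_def Dom_iff)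
    qed
  qed
qed

fun pl :: "complex list \<Rightarrow> real \<Rightarrow> complex" where
  "pl [] = linepath 0 0"
| "pl [p] = linepath p p"
| "pl (p # q # r) = linepath p q +++ pl (q # r)"

lemma pl_Cons: "ps \<noteq> [] \<Longrightarrow> pl (p # ps) = linepath p (hd ps) +++ pl ps"
  by (cases ps) auto

lemma pl_facts: "ps \<noteq> [] \<Longrightarrow> path (pl ps) \<and> pathstart (pl ps) = hd ps \<and> pathfinish (pl ps) = last ps"
  by (induction ps rule: pl.induct) auto

definition segs :: "complex set \<Rightarrow> complex list \<Rightarrow> bool" where
  "segs S ps \<longleftrightarrow> set ps \<subseteq> S \<and> successively (\<lambda>z w. closed_segment z w \<subseteq> S) ps"

lemma pl_image: "segs S ps \<Longrightarrow> ps \<noteq> [] \<Longrightarrow> path_image (pl ps) \<subseteq> S"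
proof (induction ps rule: pl.induct)
  case 1 then show ?case by simp
next
  case (2 p) then show ?case by (simp add: segs_def)
next
  case (3 p q r)
  have "segs S (q # r)" using 3(2) by (auto simp: segs_def)
  then have "path_image (pl (q # r)) \<subseteq> S" using 3 by simp
  moreover have "closed_segment p q \<subseteq> S" using 3(2) by (simp add: segs_def)
  moreover have "pathstart (pl (q # r)) = q" using pl_facts[of "q # r"] by simp
  ultimately show ?case by (simp add: path_image_join)
qed

lemma segs_append: "segs S (xs @ ys) \<Longrightarrow> segs S xs \<and> segs S ys"
  by (auto simp: segs_def successively_append_iff)

lemma segs_Cons: "segs S (x # xs) \<Longrightarrow> segs S xs"
  by (auto simp: segs_def successively_Cons)

lemma pl_append:
  assumes "segs S (xs @ z # ys)"
  shows "homotopic_paths S (pl (xs @ [z]) +++ pl (z # ys)) (pl (xs @ z # ys))"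
  using assms
proof (induction xs)
  case Nil
  have "path_image (pl (z # ys)) \<subseteq> S" using Nil pl_image by simp
  then have "homotopic_paths S (linepath z z +++ pl (z # ys)) (pl (z # ys))"
    using pl_facts[of "z # ys"] by (intro homotopic_paths_lid') auto
  then show ?case by (metis append_Nil pl.simps(2))
next
  case (Cons x xs)
  have s1: "segs S (xs @ z # ys)" using Cons(2) segs_Cons by simp
  note IH = Cons(1)[OF s1]
  define h where "h = hd (xs @ [z])"
  have h2: "hd (xs @ z # ys) = h" by (cases xs) (auto simp: h_def)
  have seg: "closed_segment x h \<subseteq> S" using Cons(2) unfolding segs_def h_def
    by (cases xs) auto
  have e1: "pl (x # xs @ [z]) = linepath x h +++ pl (xs @ [z])" using pl_Cons[of "xs @ [z]" x] by (simp add: h_def)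
  have e2: "pl (x # xs @ z # ys) = linepath x h +++ pl (xs @ z # ys)" using pl_Cons[of "xs @ z # ys" x] h2 by simp
  have sA: "segs S (xs @ [z])" using segs_append[of S "xs @ [z]" ys] s1 
    by (metis append.assoc append_Cons append_Nil segs_append)
  have sB: "segs S (z # ys)" using segs_append[of S xs "z # ys"] s1 by simp
  have iA: "path_image (pl (xs @ [z])) \<subseteq> S" using pl_image[OF sA] by simp
  have iB: "path_image (pl (z # ys)) \<subseteq> S" using pl_image[OF sB] by simp
  have fA: "path (pl (xs @ [z]))" "pathstart (pl (xs @ [z])) = h" "pathfinish (pl (xs @ [z])) = z"
    using pl_facts[of "xs @ [z]"] by (auto simp: h_def)
  have fB: "path (pl (z # ys))" "pathstart (pl (z # ys)) = z"
    using pl_facts[of "z # ys"] by auto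
  have "homotopic_paths S ((linepath x h +++ pl (xs @ [z])) +++ pl (z # ys))
          (linepath x h +++ (pl (xs @ [z]) +++ pl (z # ys)))"
    using homotopic_paths_assoc[of "linepath x h" S "pl (xs @ [z])" "pl (z # ys)"] fA fB iA iB seg
    by (simp add: homotopic_paths_sym)
  also have "homotopic_paths S \<dots> (linepath x h +++ pl (xs @ z # ys))"
    using IH seg by (intro homotopic_paths_join) (auto simp: fA)
  finally show ?case using e1 e2 by simp
qed

lemma pl_replace:
  assumes "segs S (us @ p # mid @ q # rr)" "segs S (us @ [p, q] @ rr)"
    "homotopic_paths S (pl (p # mid @ [q])) (linepath p q)"
  shows "homotopic_paths S (pl (us @ p # mid @ q # rr)) (pl (us @ [p, q] @ rr))"
  using assms(1,2)
proof (induction us)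
  case Nil
  have sB: "segs S (q # rr)" using segs_append[of S "p # mid" "q # rr"] Nil by simp
  have "homotopic_paths S (pl (p # mid @ q # rr)) (pl (p # mid @ [q]) +++ pl (q # rr))"
    using pl_append[of S "p # mid" q rr] Nil by (simp add: homotopic_paths_sym)
  also have "homotopic_paths S \<dots> (linepath p q +++ pl (q # rr))"
    using assms(3) pl_image[OF sB] pl_facts[of "q # rr"] pl_facts[of "p # mid @ [q]"] by (intro homotopic_paths_join) auto
  finally show ?case by simp
next
  case (Cons u us)
  have s1: "segs S (us @ p # mid @ q # rr)" "segs S (us @ [p, q] @ rr)" using Cons(2,3) segs_Cons by auto
  define h where "h = hd (us @ [p])"
  have h1: "hd (us @ p # mid @ q # rr) = h" "hd (us @ [p, q] @ rr) = h" by (cases us; simp add: h_def)+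
  have seg: "closed_segment u h \<subseteq> S" using Cons(2) unfolding segs_def h_def by (cases us) auto
  have "homotopic_paths S (linepath u h +++ pl (us @ p # mid @ q # rr)) (linepath u h +++ pl (us @ [p, q] @ rr))"
    using Cons(1)[OF s1] seg pl_facts[of "us @ p # mid @ q # rr"] by (intro homotopic_paths_join) (auto simp: h1)
  then show ?case using pl_Cons[of "us @ p # mid @ q # rr" u] pl_Cons[of "us @ [p, q] @ rr" u] h1 by simp
qed

definition validp :: "complex list \<Rightarrow> bool" where
  "validp ps \<longleftrightarrow> set ps \<subseteq> Dom \<and> successively (\<lambda>z w. adj (st z) (st w)) ps"

lemma validp_segs: "validp ps \<Longrightarrow> segs Dom ps"
  unfolding validp_def segs_def
  using successively_mono[of "\<lambda>z w. adj (st z) (st w)" ps "\<lambda>z w. closed_segment z w \<subseteq> Dom"]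
  by (meson seg_Dom subsetD)

lemma validp_append: "validp (xs @ ys) \<Longrightarrow> validp xs \<and> validp ys"
  by (auto simp: validp_def successively_append_iff)

lemma validp_HL: "validp qs \<Longrightarrow> (\<forall>z\<in>set qs. Re z \<le> 0) \<Longrightarrow> segs HL qs"
  unfolding validp_def segs_def
  using successively_mono[of "\<lambda>z w. adj (st z) (st w)" qs "\<lambda>z w. closed_segment z w \<subseteq> HL"]
  by (smt (verit) HL_def IntI mem_Collect_eq seg_HL subset_eq)

lemma validp_HR: "validp qs \<Longrightarrow> (\<forall>z\<in>set qs. Re z \<ge> 0) \<Longrightarrow> segs HR qs"
  unfolding validp_def segs_def
  using successively_mono[of "\<lambda>z w. adj (st z) (st w)" qs "\<lambda>z w. closed_segment z w \<subseteq> HR"]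
  by (smt (verit) HR_def IntI mem_Collect_eq seg_HR subset_eq)

lemma HL_sub: "HL \<subseteq> Dom" and HR_sub: "HR \<subseteq> Dom" by (auto simp: HL_def HR_def)

lemma half_hom:
  assumes "segs H qs" "qs \<noteq> []" "closed_segment (hd qs) (last qs) \<subseteq> H" "starlike H" "H \<subseteq> Dom"
  shows "homotopic_paths Dom (pl qs) (linepath (hd qs) (last qs))"
proof -
  have sc: "simply_connected H" using assms(4) by (rule starlike_imp_simply_connected)
  have "homotopic_paths H (pl qs) (linepath (hd qs) (last qs))"
    using sc[unfolded simply_connected_eq_homotopic_paths] pl_image[OF assms(1,2)] pl_facts[OF assms(2)] assms(3)
    by auto
  then show ?thesis using assms(5) homotopic_paths_subset by blast
qed

lemma cancel:
  assumes "validp ps" "ps \<noteq> []" "foldl step [] (map st ps) = [VM b, X, VM a]"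
  shows "\<exists>ps'. validp ps' \<and> ps' \<noteq> [] \<and> hd ps' = hd ps \<and> last ps' = last ps \<and>
     set (map st ps') \<subseteq> {VM a, X, VM b} \<and> homotopic_paths Dom (pl ps) (pl ps')"
  using assms
proof (induction "length ps" arbitrary: ps rule: less_induct)
  case less
  obtain s w where sw: "map st ps = s # w" using less(3) by (cases ps) auto
  have fw: "foldl step [s] w = [VM b, X, VM a]" using less(4) sw by simp
  show ?case
  proof (cases "backtrack (map st ps)")
    case False
    then have "set (map st ps) \<subseteq> {VM a, X, VM b}" using backtrack_or_set[OF fw] sw by auto
    moreover have "homotopic_paths Dom (pl ps) (pl ps)"
      using pl_image[OF validp_segs[OF less(2)] less(3)] pl_facts[OF less(3)] by (simp add: homotopic_paths_refl)
    ultimately show ?thesis using less(2,3) by blast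
  next
    case True
    then obtain u x y m v where bt: "map st ps = u @ [x] @ replicate (Suc m) y @ [x] @ v" "x \<noteq> y"
      unfolding backtrack_def by blast
    then obtain pu R1 where R1: "ps = pu @ R1" "map st pu = u" "map st R1 = [x] @ replicate (Suc m) y @ [x] @ v"
      by (metis map_eq_append_conv)
    then obtain p R2 where R2: "R1 = p # R2" "st p = x" "map st R2 = replicate (Suc m) y @ [x] @ v"
      by (metis append_Cons append_Nil map_eq_Cons_conv)
    then obtain pm R3 where R3: "R2 = pm @ R3" "map st pm = replicate (Suc m) y" "map st R3 = [x] @ v"
      by (metis map_eq_append_conv)
    then obtain q pv where R4: "R3 = q # pv" "st q = x" "map st pv = v"
      by (metis append_Cons append_Nil map_eq_Cons_conv)
    have ps: "ps = pu @ p # pm @ q # pv" using R1 R2 R3 R4 by simp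
    have pmne: "pm \<noteq> []" using R3 by auto
    have pmy: "\<forall>z\<in>set pm. st z = y" using R3(2) by (metis in_set_replicate imageI list.set_map)
    define ps' where "ps' = pu @ [p, q] @ pv"
    have vps: "validp (pu @ [p]) \<and> validp (p # pm @ [q]) \<and> validp (q # pv)"
      using less(2) unfolding ps
      by (metis append_Cons append_Nil append_assoc validp_append)
    have v': "validp ps'"
      using vps less(2) unfolding validp_def ps'_def ps
      by (auto simp: successively_append_iff successively_Cons adj_def R2(2) R4(2))
    have map': "map st ps' = u @ [x, x] @ v" using R1 R2 R4 by (simp add: ps'_def)
    have f': "foldl step [] (map st ps') = [VM b, X, VM a]"
      using less(4) bt backtrack_remove[OF bt(2)[symmetric], of u m v] map' by simp
    have len: "length ps' < length ps" using pmne by (simp add: ps ps'_def)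
    have hd': "hd ps' = hd ps" and last': "last ps' = last ps" by (cases pu; simp add: ps ps'_def)+
    have ne': "ps' \<noteq> []" by (simp add: ps'_def)
    obtain ps'' where ps'': "validp ps''" "ps'' \<noteq> []" "hd ps'' = hd ps'" "last ps'' = last ps'"
      "set (map st ps'') \<subseteq> {VM a, X, VM b}" "homotopic_paths Dom (pl ps') (pl ps'')"
      using less(1)[OF len v' ne' f'] by blast
    have adjxy: "adj x y"
      using vps pmne pmy R2(2) unfolding validp_def by (cases pm) (auto simp: successively_Cons)
    have sub: "homotopic_paths Dom (pl (p # pm @ [q])) (linepath p q)"
    proof -
      have sts: "\<forall>z\<in>set (p # pm @ [q]). st z = x \<or> st z = y" using pmy R2(2) R4(2) by auto
      have pqD: "p \<in> Dom" "q \<in> Dom" using vps unfolding validp_def by auto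
      have adjpq: "adj (st p) (st q)" using R2(2) R4(2) by (simp add: adj_def)
      from adjxy bt(2) obtain k where k: "(x = VM k \<and> (y = VL \<or> y = VR)) \<or> (y = VM k \<and> (x = VL \<or> x = VR))"
        unfolding adj_def by blast
      show ?thesis
      proof (cases "x = VL \<or> y = VL")
        case True
        then have re: "\<forall>z\<in>set (p # pm @ [q]). Re z \<le> 0" using sts k
          by (metis order_less_imp_le st_VL st_VM order_refl vx.distinct)
        have "segs HL (p # pm @ [q])" using validp_HL vps re by blast
        moreover have "closed_segment p q \<subseteq> HL" using seg_HL[OF pqD adjpq] re by simp
        ultimately show ?thesis using half_hom[of HL "p # pm @ [q]"] starlike_HL HL_sub by simp
      next
        case False
        then have re: "\<forall>z\<in>set (p # pm @ [q]). Re z \<ge> 0" using sts k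
          by (metis order_less_imp_le st_VR st_VM order_refl)
        have "segs HR (p # pm @ [q])" using validp_HR vps re by blast
        moreover have "closed_segment p q \<subseteq> HR" using seg_HR[OF pqD adjpq] re by simp
        ultimately show ?thesis using half_hom[of HR "p # pm @ [q]"] starlike_HR HR_sub by simp
      qed
    qed
    have "homotopic_paths Dom (pl ps) (pl ps')"
      unfolding ps ps'_def
      using pl_replace[of Dom pu p pm q pv] sub validp_segs[OF less(2)] validp_segs[OF v']
      by (simp add: ps ps'_def)
    then have "homotopic_paths Dom (pl ps) (pl ps'')" using ps''(6) homotopic_paths_trans by blast
    then show ?thesis using ps'' hd' last' by auto
  qed
qed

lemma floor_between:
  fixes s t :: real
  assumes "\<lfloor>s\<rfloor> < \<lfloor>t\<rfloor>" "t \<notin> \<int>"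
  shows "s < of_int \<lfloor>t\<rfloor>" "of_int \<lfloor>t\<rfloor> < t"
proof -
  show "s < of_int \<lfloor>t\<rfloor>" using assms(1) by (meson floor_less_iff)
  show "of_int \<lfloor>t\<rfloor> < t" using not_int_floor[OF assms(2)] .
qed

lemma floor_same_convex:
  assumes "convex B" "B \<subseteq> Dom" "z \<in> B" "w \<in> B" "Re z = 0" "Re w = 0"
  shows "\<lfloor>Im z\<rfloor> = \<lfloor>Im w\<rfloor>"
proof (rule ccontr)
  assume ne: "\<lfloor>Im z\<rfloor> \<noteq> \<lfloor>Im w\<rfloor>"
  have main: "False" if "z' \<in> B" "w' \<in> B" "Re z' = 0" "Re w' = 0" "\<lfloor>Im z'\<rfloor> < \<lfloor>Im w'\<rfloor>" for z' w'
  proof -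
    have "Im w' \<notin> \<int>" using that assms(2) by (auto simp: Dom_iff)
    define n where "n = real_of_int \<lfloor>Im w'\<rfloor>"
    have n: "Im z' < n" "n < Im w'" using floor_between[OF that(5) \<open>Im w' \<notin> \<int>\<close>] by (auto simp: n_def)
    define u where "u = (n - Im z') / (Im w' - Im z')"
    have u: "0 \<le> u" "u \<le> 1" using n by (auto simp: u_def divide_simps)
    define p where "p = (1 - u) *\<^sub>R z' + u *\<^sub>R w'"
    have "p \<in> B" using convexD[OF assms(1) that(1,2), of "1 - u" u] u by (simp add: p_def)
    moreover have "Re p = 0" using that by (simp add: p_def)
    moreover have "Im p = n"
    proof -
      have "Im p = Im z' + u * (Im w' - Im z')" by (simp add: p_def algebra_simps)
      also have "\<dots> = n" using n by (simp add: u_def)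
      finally show ?thesis .
    qed
    ultimately show False using assms(2) by (auto simp: Dom_iff n_def)
  qed
  show False using ne main[of z w] main[of w z] assms by linarith
qed

definition opp :: "complex \<Rightarrow> complex \<Rightarrow> bool" where
  "opp z w \<longleftrightarrow> (Re z < 0 \<and> Re w > 0) \<or> (Re z > 0 \<and> Re w < 0)"

lemma adj_convex:
  assumes "convex B" "B \<subseteq> Dom" "z \<in> B" "w \<in> B" "\<not> opp z w"
  shows "adj (st z) (st w)"
proof (cases "Re z = 0 \<and> Re w = 0")
  case True
  then show ?thesis using floor_same_convex[OF assms(1-4)] by (simp add: adj_def st_def)
next
  case False
  then show ?thesis using assms(5) unfolding adj_def st_def opp_def by auto
qed

lemma cc_floor:
  assumes "connected_component iRZ a b"
  shows "\<lfloor>Im a\<rfloor> = \<lfloor>Im b\<rfloor>"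
proof (rule ccontr)
  obtain T where T: "connected T" "T \<subseteq> iRZ" "a \<in> T" "b \<in> T"
    using assms unfolding connected_component_def by blast
  have cI: "connected (Im ` T)"
    using T(1) by (intro connected_continuous_image) (auto intro: continuous_intros)
  have main: False if "z \<in> T" "w \<in> T" "\<lfloor>Im z\<rfloor> < \<lfloor>Im w\<rfloor>" for z w
  proof -
    have "Im w \<notin> \<int>" using that T(2) by (auto simp: iRZ_def)
    note n = floor_between[OF that(3) this]
    have "of_int \<lfloor>Im w\<rfloor> \<in> Im ` T"
      using connected_contains_Icc[OF cI, of "Im z" "Im w"] that n by auto
    then obtain p where "p \<in> T" "Im p = of_int \<lfloor>Im w\<rfloor>" by auto
    then show False using T(2) by (auto simp: iRZ_def)
  qed
  assume "\<lfloor>Im a\<rfloor> \<noteq> \<lfloor>Im b\<rfloor>"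
  then show False using main[of a b] main[of b a] T by linarith
qed

definition earc :: "real \<Rightarrow> complex \<Rightarrow> complex \<Rightarrow> real \<Rightarrow> complex" where
  "earc \<sigma> a b t = a + of_real t * (b - a) + of_real (\<sigma> * sin (pi * t))"

lemma earc:
  assumes "a \<in> iRZ" "b \<in> iRZ" "\<lfloor>Im a\<rfloor> \<noteq> \<lfloor>Im b\<rfloor>" "\<sigma> = 1 \<or> \<sigma> = -1"
  shows "elem_slalom_side (\<sigma> = 1) (earc \<sigma> a b)" "pathstart (earc \<sigma> a b) = a"
    "pathfinish (earc \<sigma> a b) = b"
    "path_image (earc \<sigma> a b) \<subseteq> (if \<sigma> = 1 then HR else HL)"
proof -
  let ?E = "earc \<sigma> a b"
  have Ra: "Re a = 0" "Re b = 0" using assms by (auto simp: iRZ_def)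
  have ReE: "Re (?E t) = \<sigma> * sin (pi * t)" for t using Ra by (simp add: earc_def)
  have ImE: "Im (?E t) = Im a + t * (Im b - Im a)" for t by (simp add: earc_def algebra_simps)
  show ps: "pathstart ?E = a" and pf: "pathfinish ?E = b" by (auto simp: pathstart_def pathfinish_def earc_def)
  have pE: "path ?E" unfolding path_def earc_def by (intro continuous_intros)
  have "Im a \<noteq> Im b" using assms(3) by auto
  then have "inj_on ?E {0..1}" unfolding inj_on_def using ImE
    by (metis add_left_cancel mult_cancel_right right_minus_eq)
  then have sp: "simple_path ?E" using pE arc_imp_simple_path arc_def by blast
  have int: "(if \<sigma> = 1 then Re (?E t) > 0 else Re (?E t) < 0)" if "t \<in> {0<..<1}" for t
  proof -
    have "sin (pi * t) > 0" using that by (intro sin_gt_zero) auto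
    then show ?thesis using ReE assms(4) by auto
  qed
  have img: "path_image ?E \<subseteq> (if \<sigma> = 1 then HR else HL)"
  proof
    fix z assume "z \<in> path_image ?E"
    then obtain t where t: "t \<in> {0..1}" "z = ?E t" by (auto simp: path_image_def)
    show "z \<in> (if \<sigma> = 1 then HR else HL)"
    proof (cases "t = 0 \<or> t = 1")
      case True
      then have "z = a \<or> z = b" using ps pf t by (auto simp: pathstart_def pathfinish_def)
      then show ?thesis using assms Ra by (auto simp: HR_def HL_def Dom_iff iRZ_def)
    next
      case False
      then have "t \<in> {0<..<1}" using t by auto
      from int[OF this] show ?thesis using t by (auto simp: HR_def HL_def Dom_iff)
    qed
  qed
  then show "path_image ?E \<subseteq> (if \<sigma> = 1 then HR else HL)" .
  have "path_image ?E \<subseteq> Dom" using img HR_sub HL_sub by (auto split: if_splits)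
  moreover have "\<not> connected_component iRZ (pathstart ?E) (pathfinish ?E)"
    using cc_floor assms(3) ps pf by auto
  ultimately show "elem_slalom_side (\<sigma> = 1) ?E"
    unfolding elem_slalom_side_def using sp ps pf assms(1,2) int by auto
qed

definition gp :: "(real \<Rightarrow> complex) \<Rightarrow> real \<Rightarrow> real \<Rightarrow> bool" where
  "gp g y y' \<longleftrightarrow> y < y' \<and> (\<exists>B. convex B \<and> B \<subseteq> Dom \<and> g ` {y..y'} \<subseteq> B) \<and> \<not> opp (g y) (g y')"

lemma succ_hd_le_last: "successively (gp g) zs \<Longrightarrow> zs \<noteq> [] \<Longrightarrow> hd zs \<le> last zs"
proof (induction zs rule: induct_list012)
  case (3 x y xs)
  then show ?case by (auto simp: gp_def)
qed auto

lemma gp_adj: "gp g x y \<Longrightarrow> adj (st (g x)) (st (g y))"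
  unfolding gp_def using adj_convex by (metis atLeastAtMost_iff image_subset_iff less_eq_real_def order_refl)

lemma sub_pl:
  assumes "path g" "path_image g \<subseteq> Dom" "set zs \<subseteq> {0..1}" "successively (gp g) zs" "zs \<noteq> []"
  shows "homotopic_paths Dom (subpath (hd zs) (last zs) g) (pl (map g zs))"
  using assms(3-5)
proof (induction zs rule: induct_list012)
  case 1 then show ?case by simp
next
  case (2 y)
  have "subpath y y g = linepath (g y) (g y)" by (auto simp: subpath_def linepath_def fun_eq_iff algebra_simps)
  moreover have "homotopic_paths Dom (linepath (g y) (g y)) (linepath (g y) (g y))"
  proof -
    have p: "path (linepath (g y) (g y))" by (rule path_linepath)
    have "path_image (linepath (g y) (g y)) \<subseteq> Dom" using 2 assms(2) by (auto simp: path_image_def)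
    then show ?thesis using p homotopic_paths_refl by blast
  qed
  moreover have e: "hd [y] = y" "last [y] = y" "pl (map g [y]) = linepath (g y) (g y)" by simp_all
  ultimately show ?case by metis
next
  case (3 y y' xs)
  note 3 = 3(2-)[unfolded successively_Cons] 3(2-)
  have IH: "homotopic_paths Dom (subpath y' (last (y' # xs)) g) (pl (map g (y' # xs)))"
    using 3 by auto
  have g3: "gp g y y'" using 3 by simp
  have le: "y' \<le> last (y' # xs)" using succ_hd_le_last[of g "y' # xs"] 3 by simp
  have "last (y' # xs) \<in> set (y' # xs)" by (rule last_in_set) simp
  then have in01: "y \<in> {0..1}" "y' \<in> {0..1}" "last (y' # xs) \<in> {0..1}" using 3(1-3) by auto
  have "homotopic_paths Dom (subpath y (last (y' # xs)) g)
          (subpath y y' g +++ subpath y' (last (y' # xs)) g)"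
    using homotopic_join_subpaths1[OF assms(1,2) in01] le g3
    by (simp add: gp_def homotopic_paths_sym)
  also have "homotopic_paths Dom \<dots> (linepath (g y) (g y') +++ pl (map g (y' # xs)))"
  proof (rule homotopic_paths_join[OF _ IH])
    obtain B where B: "convex B" "B \<subseteq> Dom" "g ` {y..y'} \<subseteq> B" using g3 by (auto simp: gp_def)
    show "homotopic_paths Dom (subpath y y' g) (linepath (g y) (g y'))"
    proof (rule homotopic_paths_linear)
      show "path (subpath y y' g)" using assms(1) in01 by (simp add: path_subpath)
      show "closed_segment (subpath y y' g t) (linepath (g y) (g y') t) \<subseteq> Dom" if "t \<in> {0..1}" for t
      proof -
        have yy: "y \<le> y'" using g3 by (simp add: gp_def)
        have "0 \<le> (y' - y) * t" "(y' - y) * t \<le> y' - y"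
          using that yy by (auto simp: mult_left_le)
        then have "(y' - y) * t + y \<in> {y..y'}" by auto
        then have s1: "subpath y y' g t \<in> B" using B by (auto simp: subpath_def)
        have "g y \<in> B" "g y' \<in> B" using B yy by auto
        then have cs: "closed_segment (g y) (g y') \<subseteq> B" using B(1) convex_contains_segment by blast
        have "linepath (g y) (g y') t \<in> closed_segment (g y) (g y')"
          using that by (metis path_image_linepath path_image_def imageI)
        then have "subpath y y' g t \<in> B" "linepath (g y) (g y') t \<in> B" using s1 cs by auto
        then show ?thesis using B convex_contains_segment by blast
      qed
    qed auto
  qed (simp add: pathfinish_def pathstart_def subpath_def)
  finally show ?case by simp
qed

lemma hom_to_slalom:
  assumes "homotopic_paths Dom p q" "pathstart p \<in> iRZ" "pathfinish p \<in> iRZ"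
  shows "slalom_homotopic p q"
proof -
  have h: "homotopic_with_canon (\<lambda>r. pathstart r = pathstart p \<and> pathfinish r = pathfinish p) {0..1} Dom p q"
    using assms(1) unfolding homotopic_paths_def .
  show ?thesis unfolding slalom_homotopic_def
    by (rule homotopic_with_mono[OF h]) (use assms in \<open>auto simp: pathstart_def pathfinish_def\<close>)
qed

lemma piece:
  assumes "path g" "path_image g \<subseteq> Dom" "set zs \<subseteq> {0..1}" "successively (gp g) zs" "zs \<noteq> []"
    "foldl step [] (map (st \<circ> g) zs) = [VM b, X, VM a]" "a \<noteq> b" "X = VL \<or> X = VR"
    "st (g (hd zs)) = VM a" "st (g (last zs)) = VM b"
  shows "homotopy_elem_slalom (subpath (hd zs) (last zs) g)"
proof -
  define ps where "ps = map g zs"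
  have gD: "g y \<in> Dom" if "y \<in> {0..1}" for y using assms(2) that by (auto simp: path_image_def)
  have vps: "validp ps"
    unfolding validp_def ps_def
  proof
    show "set (map g zs) \<subseteq> Dom" using gD assms(3) by auto
    show "successively (\<lambda>z w. adj (st z) (st w)) (map g zs)"
      using assms(4) unfolding successively_map
      by (rule successively_mono) (auto simp: gp_adj)
  qed
  have pne: "ps \<noteq> []" using assms(5) by (simp add: ps_def)
  obtain ps' where ps': "validp ps'" "ps' \<noteq> []" "hd ps' = hd ps" "last ps' = last ps"
    "set (map st ps') \<subseteq> {VM a, X, VM b}" "homotopic_paths Dom (pl ps) (pl ps')"
    using cancel[OF vps pne, of b X a] assms(6) by (auto simp: ps_def)
  have hl01: "hd zs \<in> {0..1}" "last zs \<in> {0..1}" using assms(3,5) hd_in_set last_in_set by blast+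
  define a0 where "a0 = g (hd zs)"
  define b0 where "b0 = g (last zs)"
  have a0: "a0 \<in> iRZ" "\<lfloor>Im a0\<rfloor> = a" using assms(9) gD[OF hl01(1)]
    by (auto simp: a0_def st_VM iRZ_def Dom_iff)
  have b0: "b0 \<in> iRZ" "\<lfloor>Im b0\<rfloor> = b" using assms(10) gD[OF hl01(2)]
    by (auto simp: b0_def st_VM iRZ_def Dom_iff)
  have hps: "hd ps = a0" "last ps = b0" using assms(5) by (auto simp: ps_def a0_def b0_def hd_map last_map)
  define \<sigma> where "\<sigma> = (if X = VR then 1 else -1::real)"
  define H where "H = (if \<sigma> = 1 then HR else HL)"
  have E: "elem_slalom_side (\<sigma> = 1) (earc \<sigma> a0 b0)" "pathstart (earc \<sigma> a0 b0) = a0"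
    "pathfinish (earc \<sigma> a0 b0) = b0" "path_image (earc \<sigma> a0 b0) \<subseteq> H"
    using earc[OF a0(1) b0(1), of \<sigma>] a0 b0 assms(7) by (auto simp: \<sigma>_def H_def)
  have sH: "starlike H" "H \<subseteq> Dom" using starlike_HL starlike_HR HL_sub HR_sub by (auto simp: H_def)
  have segH: "segs H ps'"
  proof (cases "X = VR")
    case True
    then have "\<forall>z\<in>set ps'. Re z \<ge> 0" using ps'(5) by (auto simp: st_VR st_VM)
    then show ?thesis using validp_HR[OF ps'(1)] True by (simp add: H_def \<sigma>_def)
  next
    case False
    then have "X = VL" using assms(8) by auto
    then have "\<forall>z\<in>set ps'. Re z \<le> 0" using ps'(5) by (auto simp: st_VL st_VM)
    then show ?thesis using validp_HL[OF ps'(1)] False by (simp add: H_def \<sigma>_def)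
  qed
  have pE: "path (earc \<sigma> a0 b0)" using E(1) by (auto simp: elem_slalom_side_def simple_path_imp_path)
  have "homotopic_paths H (pl ps') (earc \<sigma> a0 b0)"
    using starlike_imp_simply_connected[OF sH(1), unfolded simply_connected_eq_homotopic_paths]
      pl_image[OF segH ps'(2)] pl_facts[OF ps'(2)] E pE ps'(3,4) hps by auto
  then have h3: "homotopic_paths Dom (pl ps') (earc \<sigma> a0 b0)" using sH(2) homotopic_paths_subset by blast
  have h1: "homotopic_paths Dom (subpath (hd zs) (last zs) g) (pl ps)"
    using sub_pl[OF assms(1-5)] by (simp add: ps_def)
  have "homotopic_paths Dom (subpath (hd zs) (last zs) g) (earc \<sigma> a0 b0)"
    using h1 ps'(6) h3 homotopic_paths_trans by blast
  then have "slalom_homotopic (subpath (hd zs) (last zs) g) (earc \<sigma> a0 b0)"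
    by (rule hom_to_slalom) (auto simp: a0 b0 a0_def[symmetric] b0_def[symmetric])
  then show ?thesis unfolding homotopy_elem_slalom_def elem_slalom_def using E(1) by blast
qed

fun stk :: "(nat \<Rightarrow> int) \<Rightarrow> (nat \<Rightarrow> vx) \<Rightarrow> nat \<Rightarrow> vx list" where
  "stk A r 0 = [VM (A 0)]"
| "stk A r (Suc i) = VM (A (Suc i)) # r i # stk A r i"

lemma stk_ne: "stk A r i \<noteq> []" by (cases i) auto
lemma hd_stk: "hd (stk A r i) = VM (A i)" by (cases i) auto
lemma length_stk: "length (stk A r i) = 2 * i + 1" by (induction i) auto

lemma succ_hd_less_last: "successively (gp g) zs \<Longrightarrow> length zs \<ge> 2 \<Longrightarrow> hd zs < last zs"
proof (induction zs rule: induct_list012)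
  case (3 x y xs)
  then have "y \<le> last (y # xs)" using succ_hd_le_last[of g "y # xs"] by simp
  then show ?case using 3 by (auto simp: gp_def)
qed auto

lemma foldl_Cons_nil: "foldl step [] (s # w) = foldl step [s] w" by simp

lemma peel:
  assumes g: "path g" "path_image g \<subseteq> Dom"
    and AR: "\<forall>j. A j \<noteq> A (Suc j) \<and> (r j = VL \<or> r j = VR)"
  shows "set zs \<subseteq> {0..1} \<Longrightarrow> successively (gp g) zs \<Longrightarrow> zs \<noteq> [] \<Longrightarrow>
     foldl step [] (map (st \<circ> g) zs) = stk A r (Suc i) \<Longrightarrow>
     \<exists>tt. tt 0 = hd zs \<and> tt (Suc i) = last zs \<and> (\<forall>j<Suc i. tt j < tt (Suc j)) \<and>
       (\<forall>j<Suc i. homotopy_elem_slalom (subpath (tt j) (tt (Suc j)) g))"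
proof (induction i arbitrary: zs)
  case 0
  obtain s w where sw: "map (st \<circ> g) zs = s # w" using 0(3) by (cases zs) auto
  have f: "foldl step [s] w = [VM (A 1), r 0, VM (A 0)]" using 0(4) unfolding sw by simp
  have "last (foldl step [s] w) = s" using last_foldl_step[of "[s]" w] by simp
  then have s: "s = VM (A 0)" using f by simp
  have hs: "st (g (hd zs)) = VM (A 0)" using sw s 0(3) by (cases zs) auto
  have "w \<noteq> []" using f by auto
  then have wl: "last w = VM (A 1)" using hd_foldl_step[of w "[s]"] f by simp
  have "st (g (last zs)) = last (map (st \<circ> g) zs)" using 0(3) by (simp add: last_map)
  then have ls: "st (g (last zs)) = VM (A 1)" using sw wl \<open>w \<noteq> []\<close> by simp
  have len: "length zs \<ge> 2" using sw \<open>w \<noteq> []\<close> by (metis Suc_le_eq length_Cons length_greater_0_conv length_map numeral_2_eq_2 Suc_le_mono)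
  have pc: "homotopy_elem_slalom (subpath (hd zs) (last zs) g)"
    using piece[OF g 0(1-3), of "A 1" "r 0" "A 0"] 0(4) AR hs ls by auto
  have lt: "hd zs < last zs" using succ_hd_less_last[OF 0(2) len] .
  show ?case
    by (rule exI[of _ "\<lambda>j. if j = 0 then hd zs else last zs"]) (use pc lt in auto)
next
  case (Suc i)
  obtain s w where sw: "map (st \<circ> g) zs = s # w" using Suc(4) by (cases zs) auto
  have f: "foldl step [s] w = [VM (A (Suc (Suc i))), r (Suc i)] @ stk A r (Suc i)" using Suc(5) unfolding sw by simp
  obtain w1 w2 where w: "w = w1 @ w2" "foldl step [s] w1 = stk A r (Suc i)" "w2 \<noteq> []"
    "foldl step [hd (stk A r (Suc i))] w2 = [VM (A (Suc (Suc i))), r (Suc i)] @ [hd (stk A r (Suc i))]"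
    using split_stack[OF f _ stk_ne] by (auto simp: length_stk)
  have "w1 \<noteq> []" using w(2) by auto
  then have lw1: "last w1 = VM (A (Suc i))" using hd_foldl_step[of w1 "[s]"] w(2) by (simp add: hd_stk)
  obtain us vs where uv: "zs = us @ vs" "map (st \<circ> g) us = s # w1" "map (st \<circ> g) vs = w2"
    using sw w(1) by (metis append_Cons map_eq_append_conv)
  have usne: "us \<noteq> []" using uv by auto
  have vsne: "vs \<noteq> []" using uv w(3) by auto
  have s1: "successively (gp g) us" "successively (gp g) (last us # vs)"
    using Suc(3) uv(1) usne vsne by (auto simp: successively_append_iff successively_Cons)
  have IH: "\<exists>tt. tt 0 = hd us \<and> tt (Suc i) = last us \<and> (\<forall>j<Suc i. tt j < tt (Suc j)) \<and>
       (\<forall>j<Suc i. homotopy_elem_slalom (subpath (tt j) (tt (Suc j)) g))"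
  proof -
    have a: "set us \<subseteq> {0..1}" using Suc(2) uv(1) by auto
    have b: "foldl step [] (map (st \<circ> g) us) = stk A r (Suc i)" unfolding uv(2) using w(2) by simp
    show ?thesis using Suc(1)[OF a s1(1) usne b] .
  qed
  then obtain tt where tt: "tt 0 = hd us" "tt (Suc i) = last us" "\<forall>j<Suc i. tt j < tt (Suc j)"
    "\<forall>j<Suc i. homotopy_elem_slalom (subpath (tt j) (tt (Suc j)) g)" by blast
  define zs2 where "zs2 = last us # vs"
  have "st (g (last us)) = last (map (st \<circ> g) us)" using usne by (simp add: last_map)
  then have h2: "st (g (hd zs2)) = VM (A (Suc i))" using uv(2) lw1 \<open>w1 \<noteq> []\<close> by (simp add: zs2_def)
  have m2: "map (st \<circ> g) zs2 = VM (A (Suc i)) # w2" using h2 uv(3) by (simp add: zs2_def)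
  have f2: "foldl step [] (map (st \<circ> g) zs2) = [VM (A (Suc (Suc i))), r (Suc i), VM (A (Suc i))]"
    using m2 w(4) by (simp add: hd_stk)
  have "last w2 = VM (A (Suc (Suc i)))" using hd_foldl_step[OF w(3), of "[VM (A (Suc i))]"] w(4) by (simp add: hd_stk)
  moreover have "st (g (last zs2)) = last (map (st \<circ> g) zs2)" by (simp add: last_map zs2_def)
  ultimately have l2: "st (g (last zs2)) = VM (A (Suc (Suc i)))" using m2 w(3) by simp
  have "last us \<in> set us" using usne by simp
  then have set2: "set zs2 \<subseteq> {0..1}" using Suc(2) uv(1) by (auto simp: zs2_def)
  have pc: "homotopy_elem_slalom (subpath (hd zs2) (last zs2) g)"
    using piece[OF g set2 s1(2)[folded zs2_def] _ f2] AR h2 l2 by (auto simp: zs2_def)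
  have lt: "hd zs2 < last zs2" using succ_hd_less_last[OF s1(2)[folded zs2_def]] vsne
    by (cases vs) (auto simp: zs2_def)
  have lz: "last zs = last zs2" using uv(1) vsne by (simp add: zs2_def)
  have hz: "hd zs = hd us" using uv(1) usne by simp
  show ?case
    apply (rule exI[of _ "tt(Suc (Suc i) := last zs)"])
    using tt pc lt lz hz by (auto simp: zs2_def less_Suc_eq)
qed

definition cross :: "complex \<Rightarrow> complex \<Rightarrow> complex" where
  "cross z w = z + of_real (Re z / (Re z - Re w)) * (w - z)"

definition tr :: "complex \<Rightarrow> complex \<Rightarrow> vx list" where
  "tr z w = (if opp z w then [VM \<lfloor>Im (cross z w)\<rfloor>, st w] else [st w])"

lemma cross_facts:
  assumes "opp z w"
  shows "Re (cross z w) = 0" "cross z w \<in> closed_segment z w"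
proof -
  have ne: "Re z - Re w \<noteq> 0" using assms by (auto simp: opp_def)
  define u where "u = Re z / (Re z - Re w)"
  have u: "0 \<le> u" "u \<le> 1" using assms by (auto simp: opp_def u_def divide_simps)
  have "cross z w = z + of_real u * (w - z)" by (simp add: cross_def u_def)
  also have "\<dots> = (1 - u) *\<^sub>R z + u *\<^sub>R w" by (simp add: scaleR_conv_of_real algebra_simps)
  finally have "cross z w = (1 - u) *\<^sub>R z + u *\<^sub>R w" .
  then show "cross z w \<in> closed_segment z w" using u by (auto simp: closed_segment_def)
  show "Re (cross z w) = 0" using ne by (simp add: cross_def field_simps)
qed

lemma tr_ne: "tr z w \<noteq> []" and last_tr: "last (tr z w) = st w"
  by (auto simp: tr_def)

lemma convex_index:
  assumes "convex B" "B \<subseteq> Dom"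
  shows "\<exists>k. \<forall>z\<in>B. Re z = 0 \<longrightarrow> \<lfloor>Im z\<rfloor> = k"
proof (cases "\<exists>z0\<in>B. Re z0 = 0")
  case True
  then obtain z0 where "z0 \<in> B" "Re z0 = 0" by blast
  then show ?thesis using floor_same_convex[OF assms] by metis
qed auto

lemma st_in_star: "(\<forall>z\<in>B. Re z = 0 \<longrightarrow> \<lfloor>Im z\<rfloor> = k) \<Longrightarrow> z \<in> B \<Longrightarrow> st z \<in> {VL, VR, VM k}"
  by (auto simp: st_def)

lemma tr_star:
  assumes "convex B" "B \<subseteq> Dom" "z \<in> B" "w \<in> B" "\<forall>z\<in>B. Re z = 0 \<longrightarrow> \<lfloor>Im z\<rfloor> = k"
  shows "set (tr z w) \<subseteq> {VL, VR, VM k}" "successively adj (st z # tr z w)"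
proof -
  have cB: "opp z w \<Longrightarrow> cross z w \<in> B" using cross_facts(2) assms(1,3,4) convex_contains_segment by blast
  show "set (tr z w) \<subseteq> {VL, VR, VM k}"
    using st_in_star[OF assms(5)] assms(4) cB cross_facts(1) assms(5) by (auto simp: tr_def)
  show "successively adj (st z # tr z w)"
  proof (cases "opp z w")
    case True
    then show ?thesis by (auto simp: tr_def adj_def opp_def st_def)
  next
    case False
    then show ?thesis using adj_convex[OF assms(1-4)] by (simp add: tr_def)
  qed
qed

lemma chain_app:
  assumes "successively adj (a # w1)" "successively adj (b # w2)" "w1 \<noteq> []" "last w1 = b"
  shows "successively adj (a # w1 @ w2)"
proof -
  have "successively adj ((a # w1) @ w2)"
    using assms unfolding successively_append_iff
    by (cases w2) (auto simp: successively_Cons)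
  then show ?thesis by simp
qed

definition rw :: "(nat \<Rightarrow> complex) \<Rightarrow> nat \<Rightarrow> vx list" where
  "rw p m = concat (map (\<lambda>j. tr (p j) (p (Suc j))) [0..<m])"

lemma rw_Suc: "rw p (Suc m) = rw p m @ tr (p m) (p (Suc m))"
  by (simp add: rw_def)

lemma rw_0: "rw p 0 = []" by (simp add: rw_def)

lemma last_rw: "m > 0 \<Longrightarrow> last (rw p m) = st (p m)"
  by (cases m) (auto simp: rw_Suc last_tr tr_ne)

lemma rw_ne: "m > 0 \<Longrightarrow> rw p m \<noteq> []"
  by (cases m) (auto simp: rw_Suc tr_ne)

definition cellok :: "complex \<Rightarrow> complex \<Rightarrow> complex \<Rightarrow> complex \<Rightarrow> bool" where
  "cellok a b c d \<longleftrightarrow> (\<exists>B. convex B \<and> B \<subseteq> Dom \<and> a \<in> B \<and> b \<in> B \<and> c \<in> B \<and> d \<in> B)"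

lemma rw_chain:
  assumes "\<forall>j<m. \<exists>B. convex B \<and> B \<subseteq> Dom \<and> p j \<in> B \<and> p (Suc j) \<in> B"
  shows "successively adj (st (p 0) # rw p m)"
  using assms
proof (induction m)
  case 0 then show ?case by (simp add: rw_0)
next
  case (Suc m)
  obtain B where B: "convex B" "B \<subseteq> Dom" "p m \<in> B" "p (Suc m) \<in> B" using Suc(2) by blast
  obtain k where k: "\<forall>z\<in>B. Re z = 0 \<longrightarrow> \<lfloor>Im z\<rfloor> = k" using convex_index[OF B(1,2)] by blast
  have c2: "successively adj (st (p m) # tr (p m) (p (Suc m)))" using tr_star[OF B k] by simp
  show ?case
  proof (cases "m = 0")
    case True then show ?thesis using c2 by (simp add: rw_Suc rw_0)
  next
    case False
    have "successively adj (st (p 0) # rw p m @ tr (p m) (p (Suc m)))"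
      using chain_app[OF Suc(1) c2] Suc(2) False by (simp add: rw_ne last_rw)
    then show ?thesis by (simp add: rw_Suc)
  qed
qed

lemma Re0_not_opp: "Re z = 0 \<Longrightarrow> \<not> opp z w \<and> \<not> opp w z"
  by (auto simp: opp_def)

lemma st_same_Re0:
  assumes "convex B" "B \<subseteq> Dom" "z \<in> B" "w \<in> B" "Re z = 0" "Re w = 0"
  shows "st z = st w"
  using floor_same_convex[OF assms] assms(5,6) by (simp add: st_def)

lemma row_step:
  fixes p q :: "nat \<Rightarrow> complex"
  assumes cells: "\<forall>j<M. cellok (p j) (p (Suc j)) (q j) (q (Suc j))" and M: "0 < M"
    and ends: "Re (p 0) = 0" "Re (q 0) = 0" "Re (p M) = 0" "Re (q M) = 0"
    and S: "rs S" "S \<noteq> []" "hd S = st (p 0)"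
  shows "foldl step S (rw p M) = foldl step S (rw q M)"
proof -
  obtain B0 where B0: "convex B0" "B0 \<subseteq> Dom" "p 0 \<in> B0" "q 0 \<in> B0"
    using cells M unfolding cellok_def by blast
  have st0: "st (q 0) = st (p 0)" using st_same_Re0[OF B0(1,2,4,3)] ends by simp
  have tr0: "tr (p 0) (q 0) = [hd S]" using Re0_not_opp[OF ends(1)] st0 S by (simp add: tr_def)
  have D: "foldl step S (rw p j) = foldl step S (tr (p 0) (q 0) @ rw q j @ tr (q j) (p j))" if "j \<le> M" for j
    using that
  proof (induction j)
    case 0
    have "tr (q 0) (p 0) = [hd S]" using Re0_not_opp[OF ends(2)] S by (simp add: tr_def)
    then show ?case using tr0 S by (simp add: rw_0 dup_step)
  next
    case (Suc j)
    then have jM: "j < M" by simp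
    obtain B where B: "convex B" "B \<subseteq> Dom" "p j \<in> B" "p (Suc j) \<in> B" "q j \<in> B" "q (Suc j) \<in> B"
      using cells jM unfolding cellok_def by blast
    obtain k where k: "\<forall>z\<in>B. Re z = 0 \<longrightarrow> \<lfloor>Im z\<rfloor> = k" using convex_index[OF B(1,2)] by blast
    define T where "T = foldl step S (tr (p 0) (q 0) @ rw q j)"
    have T: "T \<noteq> []" "rs T" "hd T = st (q j)"
    proof -
      show "T \<noteq> []" using S by (simp add: T_def foldl_step_ne)
      show "rs T" using S by (simp add: T_def rs_foldl)
      have "last (tr (p 0) (q 0) @ rw q j) = st (q j)"
        by (cases "j = 0") (auto simp: tr0 rw_0 last_rw rw_ne S st0)
      then show "hd T = st (q j)" using hd_foldl_step[of "tr (p 0) (q 0) @ rw q j" S] by (simp add: T_def tr0)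
    qed
    note t1 = tr_star[OF B(1,2) B(5) B(3) k] and t2 = tr_star[OF B(1,2) B(3) B(4) k]
      and t3 = tr_star[OF B(1,2) B(5) B(6) k] and t4 = tr_star[OF B(1,2) B(6) B(4) k]
    have "foldl step T (tr (q j) (p j) @ tr (p j) (p (Suc j))) =
          foldl step T (tr (q j) (q (Suc j)) @ tr (q (Suc j)) (p (Suc j)))"
    proof (rule cell[OF T(1,2)])
      show "hd T \<in> {VL, VR, VM k}" using T(3) st_in_star[OF k B(5)] by simp
      show "set (tr (q j) (p j) @ tr (p j) (p (Suc j))) \<subseteq> {VL, VR, VM k}" using t1 t2 by auto
      show "set (tr (q j) (q (Suc j)) @ tr (q (Suc j)) (p (Suc j))) \<subseteq> {VL, VR, VM k}" using t3 t4 by auto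
      show "successively adj (hd T # tr (q j) (p j) @ tr (p j) (p (Suc j)))"
        using chain_app[OF t1(2) t2(2)] T(3) by (simp add: tr_ne last_tr)
      show "successively adj (hd T # tr (q j) (q (Suc j)) @ tr (q (Suc j)) (p (Suc j)))"
        using chain_app[OF t3(2) t4(2)] T(3) by (simp add: tr_ne last_tr)
    qed (auto simp: tr_ne last_tr)
    then show ?case using Suc(1) jM by (simp add: rw_Suc T_def)
  qed
  have "foldl step S (rw p M) = foldl step (foldl step S (rw q M)) (tr (q M) (p M))"
    using D[of M] tr0 S by (simp add: dup_step)
  also have "\<dots> = foldl step S (rw q M)"
  proof -
    obtain B where B: "convex B" "B \<subseteq> Dom" "p M \<in> B" "q M \<in> B"
      using cells M unfolding cellok_def by (metis Suc_pred' lessI)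
    have "st (p M) = st (q M)" using st_same_Re0[OF B(1,2,3,4)] ends by simp
    moreover have "hd (foldl step S (rw q M)) = st (q M)"
      using hd_foldl_step[OF rw_ne[OF M]] last_rw[OF M] by simp
    ultimately show ?thesis using Re0_not_opp[OF ends(4)] S
      by (simp add: tr_def dup_step foldl_step_ne)
  qed
  finally show ?thesis .
qed

lemma ivt_Re:
  assumes "path g" "0 \<le> a" "a < b" "b \<le> 1" "opp (g a) (g b)"
  shows "\<exists>c. a < c \<and> c < b \<and> Re (g c) = 0"
proof -
  have cont: "continuous_on {a..b} (\<lambda>t. Re (g t))"
    using assms(1-4) unfolding path_def
    by (intro continuous_intros) (auto elim: continuous_on_subset)
  have "\<exists>c. a \<le> c \<and> c \<le> b \<and> Re (g c) = 0"
  proof (cases "Re (g a) < 0")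
    case True
    then have "Re (g b) > 0" using assms(5) by (auto simp: opp_def)
    then show ?thesis using IVT'[of "\<lambda>t. Re (g t)" a 0 b] True cont assms(3) by auto
  next
    case False
    then have "Re (g a) > 0" "Re (g b) < 0" using assms(5) by (auto simp: opp_def)
    then show ?thesis using IVT2'[of "\<lambda>t. Re (g t)" b 0 a] cont assms(3) by auto
  qed
  then obtain c where c: "a \<le> c" "c \<le> b" "Re (g c) = 0" by blast
  have "c \<noteq> a" "c \<noteq> b" using c assms(5) by (auto simp: opp_def)
  then show ?thesis using c by force
qed

lemma refine:
  assumes g: "path g" and x: "\<forall>j\<le>M. x j \<in> {0..1}" "\<forall>j<M. x j < x (Suc j)"
    and cells: "\<forall>j<M. \<exists>B. convex B \<and> B \<subseteq> Dom \<and> g ` {x j..x (Suc j)} \<subseteq> B"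
  shows "\<exists>zs. set zs \<subseteq> {0..1} \<and> zs \<noteq> [] \<and> hd zs = x 0 \<and> last zs = x M \<and> successively (gp g) zs \<and>
    map (st \<circ> g) zs = st (g (x 0)) # rw (\<lambda>j. g (x j)) M"
  using x cells
proof (induction M)
  case 0
  have "set [x 0] \<subseteq> {0..1}" using 0 by simp
  moreover have "map (st \<circ> g) [x 0] = st (g (x 0)) # rw (\<lambda>j. g (x j)) 0" by (simp add: rw_0)
  ultimately show ?case by (intro exI[of _ "[x 0]"]) simp
next
  case (Suc M)
  have a: "\<forall>j\<le>M. x j \<in> {0..1}" using Suc(2) by simp
  have b: "\<forall>j<M. x j < x (Suc j)" using Suc(3) by simp
  have c: "\<forall>j<M. \<exists>B. convex B \<and> B \<subseteq> Dom \<and> g ` {x j..x (Suc j)} \<subseteq> B" using Suc(4) by simp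
  obtain zs where zs0: "set zs \<subseteq> {0..1} \<and> zs \<noteq> [] \<and> hd zs = x 0 \<and> last zs = x M \<and> successively (gp g) zs \<and>
    map (st \<circ> g) zs = st (g (x 0)) # rw (\<lambda>j. g (x j)) M"
    using Suc(1)[OF a b c] by (elim exE)
  then have zs: "set zs \<subseteq> {0..1}" "zs \<noteq> []" "hd zs = x 0" "last zs = x M" "successively (gp g) zs"
    "map (st \<circ> g) zs = st (g (x 0)) # rw (\<lambda>j. g (x j)) M" using zs0 by simp_all
  obtain B where B: "convex B" "B \<subseteq> Dom" "g ` {x M..x (Suc M)} \<subseteq> B" using Suc(4) by (meson lessI)
  have lt: "x M < x (Suc M)" using Suc(3) by simp
  have in01: "x M \<in> {0..1}" "x (Suc M) \<in> {0..1}" using Suc(2) by simp_all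
  have gB: "g (x M) \<in> B" "g (x (Suc M)) \<in> B" using B(3) lt by (auto simp: image_subset_iff)
  show ?case
  proof (cases "opp (g (x M)) (g (x (Suc M)))")
    case False
    define zs' where "zs' = zs @ [x (Suc M)]"
    have "gp g (x M) (x (Suc M))" using False lt B by (auto simp: gp_def)
    then have f5: "successively (gp g) zs'" using zs(2,4,5) unfolding zs'_def successively_append_iff by simp
    have f6: "map (st \<circ> g) zs' = st (g (x 0)) # rw (\<lambda>j. g (x j)) (Suc M)"
      using zs(6) False unfolding zs'_def rw_Suc by (simp add: tr_def)
    have f1: "set zs' \<subseteq> {0..1}" using zs(1) in01 by (simp add: zs'_def)
    have f2: "zs' \<noteq> []" "hd zs' = x 0" "last zs' = x (Suc M)"
      using zs(2,3) by (simp_all add: zs'_def)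
    show ?thesis by (intro exI[of _ zs'] conjI) (rule f1 f2(1) f2(2) f2(3) f5 f6)+
  next
    case True
    obtain c where c: "x M < c" "c < x (Suc M)" "Re (g c) = 0"
      using ivt_Re[OF g _ lt _ True] in01 by auto
    define zs' where "zs' = zs @ [c, x (Suc M)]"
    have gc: "g c \<in> B" using B(3) c by auto
    have "g ` {x M..c} \<subseteq> B" "g ` {c..x (Suc M)} \<subseteq> B" using B(3) c by auto
    then have "gp g (x M) c" "gp g c (x (Suc M))" using c B(1,2) unfolding gp_def opp_def by auto
    then have f5: "successively (gp g) zs'" using zs(2,4,5) unfolding zs'_def successively_append_iff by simp
    have "st (g c) = VM \<lfloor>Im (cross (g (x M)) (g (x (Suc M))))\<rfloor>"
    proof -
      have "cross (g (x M)) (g (x (Suc M))) \<in> B"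
        using cross_facts(2)[OF True] B(1) gB convex_contains_segment by blast
      then show ?thesis using st_same_Re0[OF B(1,2) gc _ c(3) cross_facts(1)[OF True]] cross_facts(1)[OF True] by (simp add: st_def)
    qed
    then have f6: "map (st \<circ> g) zs' = st (g (x 0)) # rw (\<lambda>j. g (x j)) (Suc M)"
      using zs(6) True unfolding zs'_def rw_Suc by (simp add: tr_def)
    have "c \<in> {0..1}" using c in01 by auto
    then have f1: "set zs' \<subseteq> {0..1}" using zs(1) in01 by (simp add: zs'_def)
    have f2: "zs' \<noteq> []" "hd zs' = x 0" "last zs' = x (Suc M)"
      using zs(2,3) by (simp_all add: zs'_def)
    show ?thesis by (intro exI[of _ zs'] conjI) (rule f1 f2(1) f2(2) f2(3) f5 f6)+
  qed
qed

lemma get_h: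
  assumes "slalom_homotopic g f"
  shows "\<exists>h. continuous_on ({0..1::real} \<times> {0..1::real}) h \<and> h ` ({0..1} \<times> {0..1}) \<subseteq> Dom \<and>
    (\<forall>x\<in>{0..1}. h (0, x) = g x) \<and> (\<forall>x\<in>{0..1}. h (1, x) = f x) \<and>
    (\<forall>s\<in>{0..1}. h (s, 0) \<in> iRZ \<and> h (s, 1) \<in> iRZ)"
  using assms unfolding slalom_homotopic_def
  by (subst (asm) homotopic_with) (auto simp: subtopology_Times[symmetric] continuous_map_subtopology_eu image_subset_iff_funcset)

lemma closed_iZ: "closed iZ"
proof -
  have "iZ = {z. Re z = 0} \<inter> Im -` \<int>" by (auto simp: iZ_def)
  moreover have "closed {z. Re z = 0}" by (intro closed_Collect_eq continuous_intros)
  moreover have "closed (Im -` (\<int>::real set))" by (intro continuous_closed_vimage) (auto intro: continuous_intros)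
  ultimately show ?thesis by (metis closed_Int)
qed

lemma same_floor_cc:
  assumes "a \<in> iRZ" "b \<in> iRZ" "\<lfloor>Im a\<rfloor> = \<lfloor>Im b\<rfloor>"
  shows "connected_component iRZ a b"
proof -
  have "closed_segment a b \<subseteq> iRZ"
  proof
    fix p assume "p \<in> closed_segment a b"
    then obtain u where u: "0 \<le> u" "u \<le> 1" "p = (1 - u) *\<^sub>R a + u *\<^sub>R b"
      by (auto simp: closed_segment_def)
    have "Im p = (1 - u) * Im a + u * Im b" using u by simp
    then have "Im p \<notin> \<int>" using same_floor_segment[of "Im a" "Im b" u] assms u by (auto simp: iRZ_def)
    moreover have "Re p = 0" using u assms by (simp add: iRZ_def)
    ultimately show "p \<in> iRZ" by (simp add: iRZ_def)
  qed
  then show ?thesis unfolding connected_component_def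
    by (intro exI[of _ "closed_segment a b"]) auto
qed

lemma not_opp_tr: "\<not> opp z w \<Longrightarrow> tr z w = [st w]" by (simp add: tr_def)

lemma opp_st: "opp z w \<longleftrightarrow> (st z = VL \<and> st w = VR) \<or> (st z = VR \<and> st w = VL)"
  by (auto simp: opp_def st_def)

lemma topwalk:
  fixes F :: "nat \<Rightarrow> complex"
  assumes K: "K \<ge> 2"
    and fx: "\<forall>j\<le>n*K. st (F j) = (if j mod K = 0 then VM (A (j div K)) else r (j div K))"
    and rsd: "\<forall>q<n. r q = VL \<or> r q = VR"
    and alt: "\<forall>q. Suc q < n \<longrightarrow> r q \<noteq> r (Suc q)"
    and Ad: "\<forall>q<n. A q \<noteq> A (Suc q)"
  shows "j \<le> n*K \<Longrightarrow> foldl step [VM (A 0)] (rw F j) =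
     (if j mod K = 0 then stk A r (j div K) else r (j div K) # stk A r (j div K))"
proof (induction j)
  case 0 then show ?case by (simp add: rw_0)
next
  case (Suc j)
  define q where "q = j div K"
  define m where "m = j mod K"
  have jq: "j = q * K + m" "m < K" using K by (auto simp: q_def m_def)
  have qn: "q < n" using Suc(2) jq
    by (metis add_lessD1 le_eq_less_or_eq less_Suc_eq_le mult_less_cancel2 not_less_eq_eq trans_le_add1 less_trans_Suc)
  have IH: "foldl step [VM (A 0)] (rw F j) = (if m = 0 then stk A r q else r q # stk A r q)"
    using Suc by (simp add: q_def m_def)
  have stj: "st (F j) = (if m = 0 then VM (A q) else r q)" using fx Suc(2) by (simp add: q_def m_def)
  have stj1: "st (F (Suc j)) = (if Suc m = K then VM (A (Suc q)) else r q)"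
    using fx Suc(2) K by (simp add: q_def m_def mod_Suc div_Suc)
  have nopp: "\<not> opp (F j) (F (Suc j))" unfolding opp_st using stj stj1 by auto
  have trj: "tr (F j) (F (Suc j)) = [st (F (Suc j))]" using not_opp_tr[OF nopp] .
  have goal: "(if Suc j mod K = 0 then stk A r (Suc j div K) else r (Suc j div K) # stk A r (Suc j div K)) =
     (if Suc m = K then stk A r (Suc q) else r q # stk A r q)"
    by (simp add: q_def m_def mod_Suc div_Suc)
  have "foldl step [VM (A 0)] (rw F (Suc j)) = step (if m = 0 then stk A r q else r q # stk A r q) (st (F (Suc j)))"
    using IH trj by (simp add: rw_Suc)
  also have "\<dots> = (if Suc m = K then stk A r (Suc q) else r q # stk A r q)"
  proof (cases "m = 0")
    case True
    then have "Suc m \<noteq> K" using K by simp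
    then have s1: "st (F (Suc j)) = r q" using stj1 by simp
    show ?thesis
    proof (cases q)
      case 0 then show ?thesis using True s1 rsd qn \<open>Suc m \<noteq> K\<close> by auto
    next
      case (Suc q')
      then have "r q' \<noteq> r q" using alt qn by auto
      then show ?thesis using True s1 rsd qn \<open>Suc m \<noteq> K\<close> Suc by auto
    qed
  next
    case False
    show ?thesis
    proof (cases "Suc m = K")
      case True
      then have "st (F (Suc j)) = VM (A (Suc q))" using stj1 by simp
      moreover have "A q \<noteq> A (Suc q)" using Ad qn by auto
      ultimately show ?thesis using True False rsd qn by (cases q) auto
    next
      case False2: False
      then show ?thesis using stj1 False by (cases q) auto
    qed
  qed
  finally show ?case using goal by simp
qed

lemma t_mono:
  assumes "\<forall>i<n. t i < t (Suc i)"
  shows "i \<le> j \<Longrightarrow> j \<le> n \<Longrightarrow> (t i :: real) \<le> t j"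
proof (induction j)
  case 0 then show ?case by simp
next
  case (Suc j)
  then show ?case
  proof (cases "i = Suc j")
    case False
    then have "t i \<le> t j" using Suc by simp
    moreover have "t j < t (Suc j)" using assms Suc(3) by simp
    ultimately show ?thesis by simp
  qed simp
qed

lemma cols:
  fixes t :: "nat \<Rightarrow> real"
  assumes K: "K > 0" and t: "t 0 = 0" "t n = 1" "\<forall>i<n. t i < t (Suc i)"
    and xdef: "x = (\<lambda>j. t (j div K) + (t (Suc (j div K)) - t (j div K)) * real (j mod K) / real K)"
  shows "\<forall>i\<le>n. t i \<in> {0..1}" "\<forall>j\<le>n*K. x j \<in> {0..1}"
    "\<forall>j<n*K. x j < x (Suc j) \<and> x (Suc j) - x j \<le> 1 / real K" "x 0 = 0" "x (n*K) = 1"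
proof -
  show t01: "\<forall>i\<le>n. t i \<in> {0..1}"
    using t_mono[OF t(3), of 0] t_mono[OF t(3), of _ n] t by auto
  show "x 0 = 0" using t by (simp add: xdef)
  show "x (n*K) = 1" using t K by (simp add: xdef)
  have diff: "x (Suc j) - x j = (t (Suc (j div K)) - t (j div K)) / real K \<and> j div K < n" if "j < n*K" for j
  proof -
    define q where "q = j div K"
    define m where "m = j mod K"
    have jq: "j = q * K + m" "m < K" using K by (auto simp: q_def m_def)
    have qn: "q < n" using that jq
      by (metis add_lessD1 le_eq_less_or_eq less_Suc_eq_le mult_less_cancel2 not_less_eq_eq trans_le_add1 less_trans_Suc)
    show ?thesis
    proof (cases "Suc m = K")
      case True
      then have "x (Suc j) = t (Suc q)" "x j = t q + (t (Suc q) - t q) * real (K - 1) / real K"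
        using K by (auto simp: xdef q_def m_def mod_Suc div_Suc)
      moreover have "real (K - 1) = real K - 1" using K by simp
      ultimately show ?thesis using K qn by (simp add: field_simps q_def)
    next
      case False
      then have "x (Suc j) = t q + (t (Suc q) - t q) * real (Suc m) / real K" "x j = t q + (t (Suc q) - t q) * real m / real K"
        using K by (auto simp: xdef q_def m_def mod_Suc div_Suc)
      then show ?thesis using K qn by (simp add: field_simps q_def)
    qed
  qed
  show "\<forall>j<n*K. x j < x (Suc j) \<and> x (Suc j) - x j \<le> 1 / real K"
  proof (intro allI impI)
    fix j assume j: "j < n*K"
    define q where "q = j div K"
    have d: "x (Suc j) - x j = (t (Suc q) - t q) / real K" "q < n" using diff[OF j] by (auto simp: q_def)
    have "t q < t (Suc q)" "t q \<in> {0..1}" "t (Suc q) \<in> {0..1}" using t(3) t01 d(2) by auto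
    then have "(t (Suc q) - t q) / real K > 0" "(t (Suc q) - t q) / real K \<le> 1 / real K"
      using K by (auto simp: divide_simps)
    then show "x j < x (Suc j) \<and> x (Suc j) - x j \<le> 1 / real K"
      using d by auto
  qed
  show "\<forall>j\<le>n*K. x j \<in> {0..1}"
  proof (intro allI impI)
    fix j assume j: "j \<le> n*K"
    show "x j \<in> {0..1}"
    proof (cases "j = n*K")
      case True then show ?thesis using \<open>x (n*K) = 1\<close> by simp
    next
      case False
      then have j': "j < n*K" using j by simp
      define q where "q = j div K"
      define m where "m = j mod K"
      have qn: "q < n" using diff[OF j'] by (simp add: q_def)
      have m: "0 \<le> real m / real K" "real m / real K \<le> 1" using K by (auto simp: m_def divide_simps)
      have tq: "t q \<le> t (Suc q)" "t q \<in> {0..1}" "t (Suc q) \<in> {0..1}" using t(3) t01 qn by (auto simp: less_imp_le)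
      have xj: "x j = t q + (t (Suc q) - t q) * (real m / real K)" by (simp add: xdef q_def m_def)
      have "0 \<le> (t (Suc q) - t q) * (real m / real K)" using m tq by simp
      moreover have "(t (Suc q) - t q) * (real m / real K) \<le> t (Suc q) - t q"
        by (rule mult_left_le) (use m tq in auto)
      then show ?thesis using xj tq by auto
    qed
  qed
qed

lemma stk_cong: "\<forall>j\<le>i. A j = A' j \<Longrightarrow> \<forall>j<i. r j = r' j \<Longrightarrow> stk A r i = stk A' r' i"
  by (induction i) auto

theorem lemma9:
  fixes g :: "real \<Rightarrow> complex"
  assumes "homotopy_slalom g"
  shows "\<exists>n t. n \<ge> 1 \<and> t 0 = 0 \<and> t n = (1::real) \<and>
           (\<forall>i<n. t i < t (Suc i)) \<and>
           (\<forall>i<n. homotopy_elem_slalom (subpath (t i) (t (Suc i)) g))"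
proof -
  obtain f where sf: "slalom f" and hg: "slalom_homotopic g f"
    using assms unfolding homotopy_slalom_def by blast
  obtain n t rr where pf: "path f" "path_image f \<subseteq> Dom" and n1: "n \<ge> 1" and t: "t 0 = 0" "t n = 1"
    "\<forall>i<n. t i < t (Suc i)" and es: "\<forall>i<n. elem_slalom_side (rr i) (subpath (t i) (t (Suc i)) f)"
    and alt: "\<forall>i. Suc i < n \<longrightarrow> rr i \<noteq> rr (Suc i)"
    using sf unfolding slalom_def by blast
  obtain h where hc: "continuous_on ({0..1::real} \<times> {0..1::real}) h" and hD: "h ` ({0..1} \<times> {0..1}) \<subseteq> Dom"
    and h0: "\<forall>x\<in>{0..1}. h (0, x) = g x" and h1: "\<forall>x\<in>{0..1}. h (1, x) = f x"
    and hs: "\<forall>s\<in>{0..1}. h (s, 0) \<in> iRZ \<and> h (s, 1) \<in> iRZ"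
    using get_h[OF hg] by blast
  define Q where "Q = {0..1::real} \<times> {0..1::real}"
  have pg: "path g"
  proof -
    have "continuous_on {0..1} (\<lambda>x. h (0, x))"
      by (rule continuous_on_compose2[OF hc]) (auto intro!: continuous_intros)
    then show ?thesis unfolding path_def using h0 continuous_on_eq by (metis (no_types, lifting))
  qed
  have gD: "path_image g \<subseteq> Dom"
  proof
    fix z assume "z \<in> path_image g"
    then obtain y where y: "y \<in> {0..1}" "z = g y" by (auto simp: path_image_def)
    then have "z = h (0, y)" using h0 by simp
    moreover have "(0, y) \<in> {0..1::real} \<times> {0..1::real}" using y by simp
    ultimately show "z \<in> Dom" using hD by blast
  qed
  have cK: "compact (h ` Q)" unfolding Q_def by (intro compact_continuous_image hc compact_Times) auto
  obtain d where d: "d > 0" "\<forall>z\<in>h ` Q. \<forall>y\<in>iZ. d \<le> dist z y"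
    using separate_compact_closed[OF cK closed_iZ] hD by (auto simp: Q_def Dom_def)
  have ballD: "ball z d \<subseteq> Dom" if "z \<in> h ` Q" for z
  proof
    fix w assume "w \<in> ball z d"
    then have "dist z w < d" by simp
    show "w \<in> Dom"
    proof (rule ccontr)
      assume "w \<notin> Dom"
      then have "w \<in> iZ" by (simp add: Dom_def)
      then have "d \<le> dist z w" using d(2) that by blast
      then show False using \<open>dist z w < d\<close> by simp
    qed
  qed
  have uc: "uniformly_continuous_on Q h" unfolding Q_def by (intro compact_uniformly_continuous hc compact_Times) auto
  obtain \<delta> where \<delta>: "\<delta> > 0" "\<forall>p\<in>Q. \<forall>p'\<in>Q. dist p' p < \<delta> \<longrightarrow> dist (h p') (h p) < d"
    using uc[unfolded uniformly_continuous_on_def] d(1) by metis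
  obtain K :: nat where K: "K \<ge> 2" "1 / real K < \<delta> / 2"
  proof -
    obtain N :: nat where "2 / \<delta> < real N" using reals_Archimedean2 by blast
    then have "2 < real N * \<delta>" using \<delta>(1) by (simp add: divide_simps)
    then have "2 < \<delta> * (2 + real N)" using \<delta>(1) by (simp add: algebra_simps)
    then have "1 / real (N + 2) < \<delta> / 2" using \<delta>(1) by (simp add: divide_simps)
    then show ?thesis using that[of "N + 2"] by simp
  qed
  have Kp: "K > 0" using K by simp
  define x where "x = (\<lambda>j. t (j div K) + (t (Suc (j div K)) - t (j div K)) * real (j mod K) / real K)"
  define M where "M = n * K"
  note cl = cols[OF Kp t x_def]
  have x01: "\<forall>j\<le>M. x j \<in> {0..1}" and xinc: "\<forall>j<M. x j < x (Suc j) \<and> x (Suc j) - x j \<le> 1 / real K"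
    and x0: "x 0 = 0" and xM: "x M = 1" using cl by (auto simp: M_def)
  have M0: "0 < M" using n1 K by (simp add: M_def)
  define P where "P = (\<lambda>i j. h (real i / real K, x j))"
  have cell: "h (s, y) \<in> ball (P i j) d" "ball (P i j) d \<subseteq> Dom" "P i j \<in> h ` Q"
    if "i < K" "j < M" "s \<in> {real i / real K..real (Suc i) / real K}" "y \<in> {x j..x (Suc j)}" for i j s y
  proof -
    have i01: "real i / real K \<in> {0..1}" using that(1) by auto
    have "real (Suc i) / real K \<le> 1" using that(1) by (simp add: divide_simps)
    moreover have "0 \<le> real i / real K" by simp
    moreover have si: "real i / real K \<le> s" "s \<le> real (Suc i) / real K" using that(3) by auto
    moreover have "0 \<le> s" by (rule order_trans[OF _ si(1)]) simp
    ultimately have s01: "s \<in> {0..1}" by simp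
    have xj: "x j \<in> {0..1}" "x (Suc j) \<in> {0..1}" using x01 that(2) by auto
    have y01: "y \<in> {0..1}" using that(4) xj by auto
    show PQ: "P i j \<in> h ` Q" using i01 xj by (auto simp: P_def Q_def)
    have "\<bar>s - real i / real K\<bar> \<le> 1 / real K" using that(3) by (auto simp: divide_simps)
    moreover have "\<bar>y - x j\<bar> \<le> 1 / real K" using that(4) xinc that(2) by auto
    moreover have "1 / real K < \<delta> / sqrt 2"
    proof -
      have "\<delta> / 2 \<le> \<delta> / sqrt 2" using \<delta>(1) sqrt2_less_2 by (intro divide_left_mono) auto
      then show ?thesis using K(2) by linarith
    qed
    ultimately have "dist (s, y) (real i / real K, x j) < \<delta>"
      unfolding dist_Pair_Pair dist_real_def by (intro real_sqrt_sum_squares_less) auto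
    then have "dist (h (s, y)) (h (real i / real K, x j)) < d"
      using \<delta>(2) s01 y01 i01 xj by (auto simp: Q_def)
    then show "h (s, y) \<in> ball (P i j) d" by (simp add: P_def dist_commute)
    show "ball (P i j) d \<subseteq> Dom" using ballD PQ by simp
  qed
  have cellok: "cellok (P i j) (P i (Suc j)) (P (Suc i) j) (P (Suc i) (Suc j))" if "i < K" "j < M" for i j
  proof -
    have lt: "x j \<le> x (Suc j)" "real i / real K \<le> real (Suc i) / real K" using xinc that by (auto simp: divide_simps)
    have "P i j \<in> ball (P i j) d" "P i (Suc j) \<in> ball (P i j) d" "P (Suc i) j \<in> ball (P i j) d"
      "P (Suc i) (Suc j) \<in> ball (P i j) d"
      using cell(1)[OF that, of "real i / real K" "x j"] cell(1)[OF that, of "real i / real K" "x (Suc j)"]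
        cell(1)[OF that, of "real (Suc i) / real K" "x j"] cell(1)[OF that, of "real (Suc i) / real K" "x (Suc j)"]
        lt by (auto simp: P_def)
    moreover have "ball (P i j) d \<subseteq> Dom" using cell(2)[OF that, of "real i / real K" "x j"] lt by auto
    ultimately show ?thesis unfolding cellok_def
      by (intro exI[of _ "ball (P i j) d"]) auto
  qed
  have ends: "Re (P i 0) = 0" "Re (P i M) = 0" if "i \<le> K" for i
  proof -
    have "real i / real K \<in> {0..1}" using that Kp by (auto simp: divide_simps)
    then show "Re (P i 0) = 0" "Re (P i M) = 0" using hs x0 xM by (auto simp: P_def iRZ_def)
  qed
  have stcol: "st (P i 0) = st (P 0 0)" if "i \<le> K" for i
    using that
  proof (induction i)
    case (Suc i)
    obtain B where B: "convex B" "B \<subseteq> Dom" "P i 0 \<in> B" "P (Suc i) 0 \<in> B"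
      using cellok[of i 0] Suc(2) M0 unfolding cellok_def by auto
    show ?case using st_same_Re0[OF B(1-4)] ends[of i] ends[of "Suc i"] Suc by simp
  qed simp
  define S0 where "S0 = [st (P 0 0)]"
  have rows: "foldl step S0 (rw (P i) M) = foldl step S0 (rw (P 0) M)" if "i \<le> K" for i
    using that
  proof (induction i)
    case (Suc i)
    have "foldl step S0 (rw (P i) M) = foldl step S0 (rw (P (Suc i)) M)"
    proof (rule row_step)
      show "\<forall>j<M. cellok (P i j) (P i (Suc j)) (P (Suc i) j) (P (Suc i) (Suc j))" using cellok Suc(2) by auto
      show "hd S0 = st (P i 0)" using stcol[of i] Suc(2) by (simp add: S0_def)
    qed (use M0 ends[of i] ends[of "Suc i"] Suc(2) in \<open>auto simp: S0_def\<close>)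
    then show ?case using Suc by simp
  qed simp
  define A where "A = (\<lambda>i. \<lfloor>Im (f (t i))\<rfloor>)"
  define r where "r = (\<lambda>i. if rr i then VR else VL)"
  have fti: "f (t i) \<in> iRZ" if "i \<le> n" for i
  proof (cases "i < n")
    case True
    then show ?thesis using es by (auto simp: elem_slalom_side_def pathstart_def subpath_def)
  next
    case False
    then have "i = Suc (n - 1)" "n - 1 < n" using that n1 by auto
    then show ?thesis using es by (auto simp: elem_slalom_side_def pathfinish_def subpath_def)
  qed
  have PK: "P K j = f (x j)" if "j \<le> M" for j using h1 x01 that Kp by (simp add: P_def)
  have P0: "P 0 j = g (x j)" if "j \<le> M" for j using h0 x01 that by (simp add: P_def)
  have fx: "\<forall>j\<le>n*K. st (f (x j)) = (if j mod K = 0 then VM (A (j div K)) else r (j div K))"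
  proof (intro allI impI)
    fix j assume j: "j \<le> n*K"
    define q where "q = j div K"
    define m where "m = j mod K"
    have jq: "j = q * K + m" "m < K" using Kp by (auto simp: q_def m_def)
    show "st (f (x j)) = (if j mod K = 0 then VM (A (j div K)) else r (j div K))"
    proof (cases "m = 0")
      case True
      have qn: "q \<le> n" using div_le_mono[OF j, of K] Kp by (simp add: q_def)
      have "x j = t q" using True by (simp add: x_def q_def m_def)
      then show ?thesis using fti[OF qn] True by (simp add: st_def iRZ_def A_def q_def m_def)
    next
      case False
      have qn: "q < n"
      proof (rule ccontr)
        assume "\<not> q < n"
        then have "q * K \<ge> n * K" by simp
        then show False using j jq(1) False by linarith
      qed
      have mK: "real m / real K \<in> {0<..<1}" using False jq(2) Kp by (auto simp: divide_simps)
      have xe: "f (x j) = subpath (t q) (t (Suc q)) f (real m / real K)"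
      proof -
        have "x j = (t (Suc q) - t q) * (real m / real K) + t q" by (simp add: x_def q_def m_def)
        then show ?thesis by (simp add: subpath_def)
      qed
      have "if rr q then Re (f (x j)) > 0 else Re (f (x j)) < 0"
        using es qn mK xe unfolding elem_slalom_side_def by auto
      then show ?thesis using False by (auto simp: st_def r_def q_def m_def)
    qed
  qed
  have Ad: "\<forall>q<n. A q \<noteq> A (Suc q)"
  proof (intro allI impI)
    fix q assume q: "q < n"
    have "\<not> connected_component iRZ (f (t q)) (f (t (Suc q)))"
      using es q by (auto simp: elem_slalom_side_def pathstart_def pathfinish_def subpath_def)
    then show "A q \<noteq> A (Suc q)" using same_floor_cc fti q by (auto simp: A_def)
  qed
  have top: "foldl step [VM (A 0)] (rw (\<lambda>j. f (x j)) M) = stk A r n"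
    using topwalk[OF K(1) fx _ _ Ad, of M] alt Kp by (auto simp: M_def r_def)
  have "st (P 0 0) = VM (A 0)"
    using stcol[of K] PK[of 0] fx x0 by (auto simp: A_def)
  then have S0A: "S0 = [VM (A 0)]" by (simp add: S0_def)
  have rwK: "rw (P K) M = rw (\<lambda>j. f (x j)) M"
    unfolding rw_def using PK by (intro arg_cong[where f=concat] map_cong) auto
  have rw0: "rw (P 0) M = rw (\<lambda>j. g (x j)) M"
    unfolding rw_def using P0 by (intro arg_cong[where f=concat] map_cong) auto
  have bottom: "foldl step S0 (rw (\<lambda>j. g (x j)) M) = stk A r n"
    using rows[of K] top S0A rwK rw0 by simp
  have gcells: "\<forall>j<M. \<exists>B. convex B \<and> B \<subseteq> Dom \<and> g ` {x j..x (Suc j)} \<subseteq> B"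
  proof (intro allI impI)
    fix j assume j: "j < M"
    have "g ` {x j..x (Suc j)} \<subseteq> ball (P 0 j) d"
    proof
      fix z assume "z \<in> g ` {x j..x (Suc j)}"
      then obtain y where y: "y \<in> {x j..x (Suc j)}" "z = g y" by auto
      have "x j \<in> {0..1}" "x (Suc j) \<in> {0..1}" using x01 j by auto
      then have "y \<in> {0..1}" using y(1) by auto
      then have "z = h (0, y)" using h0 y by simp
      then show "z \<in> ball (P 0 j) d" using cell(1)[OF _ j _ y(1), of 0 0] K by simp
    qed
    moreover have "x j \<le> x (Suc j)" using xinc j by (simp add: less_imp_le)
    then have "ball (P 0 j) d \<subseteq> Dom" using cell(2)[OF _ j, of 0 0 "x j"] Kp by auto
    ultimately show "\<exists>B. convex B \<and> B \<subseteq> Dom \<and> g ` {x j..x (Suc j)} \<subseteq> B"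
      by (intro exI[of _ "ball (P 0 j) d"]) auto
  qed
  have xinc': "\<forall>j<M. x j < x (Suc j)" using xinc by simp
  obtain zs where zs0: "set zs \<subseteq> {0..1} \<and> zs \<noteq> [] \<and> hd zs = x 0 \<and> last zs = x M \<and> successively (gp g) zs \<and>
    map (st \<circ> g) zs = st (g (x 0)) # rw (\<lambda>j. g (x j)) M"
    using refine[OF pg x01 xinc' gcells] by (elim exE)
  note zs = zs0[THEN conjunct1] zs0[THEN conjunct2, THEN conjunct1]
    zs0[THEN conjunct2, THEN conjunct2, THEN conjunct1]
    zs0[THEN conjunct2, THEN conjunct2, THEN conjunct2, THEN conjunct1]
    zs0[THEN conjunct2, THEN conjunct2, THEN conjunct2, THEN conjunct2, THEN conjunct1]
    zs0[THEN conjunct2, THEN conjunct2, THEN conjunct2, THEN conjunct2, THEN conjunct2]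
  have "st (g (x 0)) = st (P 0 0)" using P0[of 0] by simp
  then have fz: "foldl step [] (map (st \<circ> g) zs) = stk A r n"
    using zs(6) bottom by (simp add: S0_def)
  define A' where "A' = (\<lambda>j. if j \<le> n then A j else A n + 2 * int (j - n))"
  define r' where "r' = (\<lambda>j. if j < n then r j else VL)"
  have AR: "\<forall>j. A' j \<noteq> A' (Suc j) \<and> (r' j = VL \<or> r' j = VR)"
    using Ad by (auto simp: A'_def r'_def r_def)
  have "stk A r n = stk A' r' n" by (rule stk_cong) (auto simp: A'_def r'_def)
  then have fz': "foldl step [] (map (st \<circ> g) zs) = stk A' r' (Suc (n - 1))" using fz n1 by simp
  obtain tt where tt0: "tt 0 = hd zs \<and> tt (Suc (n - 1)) = last zs \<and> (\<forall>j<Suc (n - 1). tt j < tt (Suc j)) \<and>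
    (\<forall>j<Suc (n - 1). homotopy_elem_slalom (subpath (tt j) (tt (Suc j)) g))"
    using peel[OF pg gD AR zs(1) zs(5) zs(2) fz'] by (elim exE)
  note tt = tt0[THEN conjunct1] tt0[THEN conjunct2, THEN conjunct1]
    tt0[THEN conjunct2, THEN conjunct2, THEN conjunct1] tt0[THEN conjunct2, THEN conjunct2, THEN conjunct2]
  show ?thesis
    by (rule exI[of _ n], rule exI[of _ tt]) (use tt n1 zs(3,4) x0 xM in auto)
qed

end
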